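(* Let $P_Z$ be a distribution on $\mathcal{Z}$, let $S=(Z_1,\ldots,Z_n)$ consist of $n$ i.i.d. samples from $P_Z$, and let $W$ take values in a Polish metric space $(\mathcal{W},\rho)$ with conditional distribution $P_{W|S}$. Let $J$ be a uniformly random subset of $[n]$ of size $m$, independent of $(W,S)$. Then $$\frac1n\sum_{i=1}^n\mathbb{E}\big[\mathbb{W}(P_{W|Z_i},P_W)\big]\le\mathbb{E}\big[\mathbb{W}(P_{W|S},P_{W|S_{J^c}})\big].$$
   Context: For $j\subseteq[n]$, $S_j=(Z_i)_{i\in j}$, $j^c=[n]\setminus j$, and $P_{W|S_{j^c}}$ is the conditional law of $W$ given $S_{j^c}$. $\mathbb{W}$ is the order-1 Wasserstein distance with respect to $\rho$: $\mathbb{W}(P,Q)=\inf_{R\in\Pi(P,Q)}\int\rho\,dR$ over couplings. *)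

theory Defs
  imports "HOL-Probability.Probability"
begin

definition couplings :: "'w::polish_space measure \<Rightarrow> 'w measure \<Rightarrow> ('w \<times> 'w) measure set" where
  "couplings P Q = {R. prob_space R \<and> sets R = sets (borel :: ('w \<times> 'w) measure)
      \<and> distr R borel fst = P \<and> distr R borel snd = Q}"

definition wasserstein1 :: "'w::polish_space measure \<Rightarrow> 'w measure \<Rightarrow> ennreal" where
  "wasserstein1 P Q = (INF R \<in> couplings P Q. \<integral>\<^sup>+ x. ennreal (dist (fst x) (snd x)) \<partial>R)"

definition sample_law :: "nat \<Rightarrow> 'z measure \<Rightarrow> (nat \<Rightarrow> 'z) measure" where
  "sample_law n PZ = PiM {..<n} (\<lambda>_. PZ)"

text \<open>Marginal law P_W of W, where K s = P_{W|S=s}.\<close>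
definition law_W :: "nat \<Rightarrow> 'z measure \<Rightarrow> ((nat \<Rightarrow> 'z) \<Rightarrow> 'w measure) \<Rightarrow> 'w measure" where
  "law_W n PZ K = bind (sample_law n PZ) K"

text \<open>Conditional law P_{W|Z_i = z}: integrate the kernel over the other (independent) samples.\<close>
definition law_W_given_Zi ::
  "nat \<Rightarrow> 'z measure \<Rightarrow> ((nat \<Rightarrow> 'z) \<Rightarrow> 'w measure) \<Rightarrow> nat \<Rightarrow> 'z \<Rightarrow> 'w measure" where
  "law_W_given_Zi n PZ K i z = bind (sample_law n PZ) (\<lambda>s. K (s(i := z)))"

text \<open>Conditional law P_{W|S_{J^c}}, evaluated at the sample s (only s restricted to
  [n] - J matters): integrate the kernel over fresh samples on the coordinates in J.\<close>
definition law_W_given_compl ::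
  "nat \<Rightarrow> 'z measure \<Rightarrow> ((nat \<Rightarrow> 'z) \<Rightarrow> 'w measure) \<Rightarrow> nat set \<Rightarrow> (nat \<Rightarrow> 'z) \<Rightarrow> 'w measure" where
  "law_W_given_compl n PZ K J s =
     bind (PiM J (\<lambda>_. PZ)) (\<lambda>t. K (merge J ({..<n} - J) (t, s)))"

end

theory Submission
  imports Defs
begin

definition dseq :: "nat \<Rightarrow> 'w::polish_space" where
  "dseq = (SOME c. \<forall>x e. 0 < e \<longrightarrow> (\<exists>k. dist (c k) x < e))"

lemma dseq_dense: "0 < e \<Longrightarrow> \<exists>k. dist (dseq k) (x::'w::polish_space) < e"
proof -
  obtain D :: "'w set" where D: "countable D" "\<And>X. open X \<Longrightarrow> X \<noteq> {} \<Longrightarrow> \<exists>d\<in>D. d \<in> X"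
    using countable_dense_exists by blast
  have Dne: "D \<noteq> {}" using D(2)[of UNIV] by auto
  define c where "c = from_nat_into D"
  have "\<forall>x e. 0 < e \<longrightarrow> (\<exists>k. dist (c k) x < e)"
  proof (intro allI impI)
    fix x :: 'w and e :: real assume "0 < e"
    then obtain d where "d \<in> D" "d \<in> ball x e" using D(2)[of "ball x e"] by auto
    then obtain k where "c k = d" unfolding c_def using from_nat_into_surj[OF D(1)] by metis
    then show "\<exists>k. dist (c k) x < e" using \<open>d \<in> ball x e\<close> by (auto simp: dist_commute)
  qed
  then have ex: "\<exists>c::nat\<Rightarrow>'w. \<forall>x e. 0 < e \<longrightarrow> (\<exists>k. dist (c k) x < e)" by blast
  show "0 < e \<Longrightarrow> ?thesis" using someI_ex[OF ex] unfolding dseq_def by blast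
qed

definition cell :: "real \<Rightarrow> nat \<Rightarrow> 'w::polish_space set" where
  "cell e k = ball (dseq k) e - (\<Union>j<k. ball (dseq j) e)"

lemma cell_borel[measurable]: "cell e k \<in> sets borel"
  unfolding cell_def by auto

lemma cell_disj: "disjoint_family (cell e)"
  unfolding disjoint_family_on_def cell_def
  by (auto, metis linorder_neqE_nat lessThan_iff)

lemma cell_cover: "0 < e \<Longrightarrow> \<exists>k. x \<in> cell e k"
proof -
  assume "0 < e"
  define k where "k = (LEAST k. x \<in> ball (dseq k) e)"
  have ex: "\<exists>k. x \<in> ball (dseq k) e" using dseq_dense[OF \<open>0<e\<close>, of x] by auto
  then have "x \<in> ball (dseq k) e" unfolding k_def by (rule LeastI_ex)
  moreover have "\<And>j. j < k \<Longrightarrow> x \<notin> ball (dseq j) e" unfolding k_def using not_less_Least by blast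
  ultimately show ?thesis unfolding cell_def by blast
qed

lemma cell_UN: "0 < e \<Longrightarrow> (\<Union>k. cell e k) = UNIV"
  using cell_cover by blast

lemma cell_dist: "x \<in> cell e k \<Longrightarrow> dist x (dseq k) < e"
  unfolding cell_def by (auto simp: dist_commute)

definition Dm :: "(nat \<Rightarrow> 'w::metric_space) \<Rightarrow> nat \<Rightarrow> nat \<Rightarrow> real" where "Dm c k l = dist (c k) (c l)"

lemma cell_D_le: fixes x y :: "'w::polish_space" assumes "x \<in> cell e k" "y \<in> cell e l" shows "Dm (dseq::nat\<Rightarrow>'w) k l \<le> dist x y + 2 * e"
proof -
  have a: "dist (dseq k) x < e" using cell_dist[OF assms(1)] by (simp add: dist_commute)
  have b: "dist y (dseq l) < e" using cell_dist[OF assms(2)] by (simp add: dist_commute)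
  have "dist (dseq k) (dseq l :: 'w) \<le> dist (dseq k) x + dist x (dseq l)" using dist_triangle by blast
  also have "dist x (dseq l) \<le> dist x y + dist y (dseq l)" using dist_triangle by blast
  finally show ?thesis unfolding Dm_def using a b by linarith
qed

lemma cell_dist_le: fixes x y :: "'w::polish_space" assumes "x \<in> cell e k" "y \<in> cell e l" shows "dist x y \<le> Dm (dseq::nat\<Rightarrow>'w) k l + 2 * e"
proof -
  have a: "dist x (dseq k) < e" using cell_dist[OF assms(1)] by simp
  have b: "dist (dseq l) y < e" using cell_dist[OF assms(2)] by (simp add: dist_commute)
  have "dist x y \<le> dist x (dseq k) + dist (dseq k) y" using dist_triangle by blast
  also have "dist (dseq k) y \<le> dist (dseq k) (dseq l :: 'w) + dist (dseq l) y" using dist_triangle by blast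
  finally show ?thesis unfolding Dm_def using a b by linarith
qed

definition dcoup :: "(nat \<Rightarrow> nat \<Rightarrow> ennreal) \<Rightarrow> (nat \<Rightarrow> ennreal) \<Rightarrow> (nat \<Rightarrow> ennreal) \<Rightarrow> bool" where
  "dcoup th p q \<longleftrightarrow> (\<forall>k. (\<Sum>l. th k l) = p k) \<and> (\<forall>l. (\<Sum>k. th k l) = q l)"

definition dcost :: "(nat \<Rightarrow> nat \<Rightarrow> real) \<Rightarrow> (nat \<Rightarrow> nat \<Rightarrow> ennreal) \<Rightarrow> ennreal" where
  "dcost D th = (\<Sum>k. \<Sum>l. th k l * ennreal (D k l))"

lemma my_le_suminf: "(f i :: ennreal) \<le> (\<Sum>i. f i)"
  using ennreal_suminf_lessD[of f "f i" i] by (meson linorder_not_le order_less_irrefl)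

lemma inv_mult_cancel: "(x::ennreal) \<le> y \<Longrightarrow> y \<noteq> \<top> \<Longrightarrow> x * inverse y * y = x"
proof (cases "y = 0")
  case True assume "x \<le> y" then show ?thesis using True by simp
next
  case False assume "y \<noteq> \<top>"
  then have "inverse y * y = 1"
    using False by (metis Groups.mult_ac(2) divide_ennreal_def divide_eq_1_ennreal)
  then show ?thesis by (simp add: mult.assoc)
qed

lemma space_borel_sets: "sets P = sets (borel::'a::topological_space measure) \<Longrightarrow> space P = UNIV"
  using sets_eq_imp_space_eq[of P borel] by simp

lemma cell_mass_sum:
  assumes "prob_space P" "sets P = sets (borel :: 'w::polish_space measure)" "0 < e"
  shows "(\<Sum>k. emeasure P (cell e k :: 'w set)) = 1"
proof -
  have "(\<Sum>k. emeasure P (cell e k :: 'w set)) = emeasure P (\<Union>k. cell e k)"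
  proof (rule suminf_emeasure)
    show "range (cell e) \<subseteq> sets P" using assms(2) cell_borel by blast
  qed (rule cell_disj)
  also have "\<dots> = emeasure P (space P)" using cell_UN[OF assms(3)] space_borel_sets[OF assms(2)] by metis
  finally show ?thesis using prob_space.emeasure_space_1[OF assms(1)] by simp
qed

lemma cell_mass_sum_inter:
  assumes "sets P = sets (borel :: 'w::polish_space measure)" "0 < e" "A \<in> sets borel"
  shows "(\<Sum>k. emeasure P (A \<inter> cell e k :: 'w set)) = emeasure P A"
proof -
  have "(\<Sum>k. emeasure P (A \<inter> cell e k :: 'w set)) = emeasure P (\<Union>k. A \<inter> cell e k)"
  proof (intro suminf_emeasure)
    have "A \<inter> cell e k \<in> sets P" for k using assms(1,3) cell_borel[of e k] by (metis sets.Int)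
    then show "range (\<lambda>k. A \<inter> cell e k) \<subseteq> sets P" by blast
    show "disjoint_family (\<lambda>k. A \<inter> cell e k)"
      using cell_disj[of e] unfolding disjoint_family_on_def by blast
  qed
  also have "(\<Union>k. A \<inter> cell e k) = A" using cell_UN[OF assms(2)] by blast
  finally show ?thesis .
qed

lemma dcoup_le1: "dcoup th p q \<Longrightarrow> th k l \<le> p k"
  unfolding dcoup_def using my_le_suminf[of "th k" l] by simp
lemma dcoup_le2: "dcoup th p q \<Longrightarrow> th k l \<le> q l"
  unfolding dcoup_def using my_le_suminf[of "\<lambda>k. th k l" k] by simp

lemma dcoup_total: "dcoup th p q \<Longrightarrow> (\<Sum>k. \<Sum>l. th k l) = (\<Sum>k. p k)"
  unfolding dcoup_def by simp

lemma suminf_swap_ennreal: "(\<Sum>i. \<Sum>j. f i j :: ennreal) = (\<Sum>j. \<Sum>i. f i j)"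
proof -
  interpret pair_sigma_finite "count_space (UNIV::nat set)" "count_space (UNIV::nat set)"
    by (intro pair_sigma_finite.intro sigma_finite_measure_count_space_countable) auto
  have m: "case_prod f \<in> borel_measurable (count_space UNIV \<Otimes>\<^sub>M count_space UNIV)"
    by (simp add: pair_measure_countable)
  have "(\<Sum>i. \<Sum>j. f i j) = (\<integral>\<^sup>+i. \<integral>\<^sup>+j. f i j \<partial>count_space UNIV \<partial>count_space UNIV)"
    by (simp add: nn_integral_count_space_nat)
  also have "\<dots> = (\<integral>\<^sup>+j. \<integral>\<^sup>+i. f i j \<partial>count_space UNIV \<partial>count_space UNIV)"
    using Fubini'[OF m] by simp
  also have "\<dots> = (\<Sum>j. \<Sum>i. f i j)"
    by (simp add: nn_integral_count_space_nat)
  finally show ?thesis .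
qed

lemma lift_bound:
  fixes P Q :: "'w::polish_space measure"
  assumes P: "prob_space P" "sets P = sets borel" and Q: "prob_space Q" "sets Q = sets borel"
    and e: "0 < e"
    and th: "dcoup th (\<lambda>k. emeasure P (cell e k)) (\<lambda>l. emeasure Q (cell e l))"
  shows "wasserstein1 P Q \<le> dcost (Dm (dseq::nat\<Rightarrow>'w)) th + ennreal (2 * e)"
proof -
  define p where "p k = emeasure P (cell e k)" for k
  define q where "q l = emeasure Q (cell e l)" for l
  define c where "c k l = th k l * inverse (p k) * inverse (q l)" for k l
  define G where "G xy = (\<Sum>k. \<Sum>l. c k l * indicator (cell e k \<times> cell e l) xy)" for xy :: "'w \<times> 'w"
  define L where "L = density (P \<Otimes>\<^sub>M Q) G"
  interpret PP: prob_space P by fact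
  interpret QQ: prob_space Q by fact
  interpret PQ: pair_prob_space P Q ..
  have th': "dcoup th p q" using th unfolding p_def q_def by simp
  have sP: "space P = UNIV" "space Q = UNIV" using P Q space_borel_sets by blast+
  have sPQ: "sets (P \<Otimes>\<^sub>M Q) = sets (borel :: ('w\<times>'w) measure)"
    using sets_pair_measure_cong[OF P(2) Q(2)] borel_prod by metis
  have spPQ: "space (P \<Otimes>\<^sub>M Q) = UNIV" using sPQ space_borel_sets by blast
  have cellP[measurable]: "cell e k \<in> sets P" "cell e k \<in> sets Q" for k using P Q by auto
  have [measurable]: "cell e k \<times> cell e l \<in> sets (P \<Otimes>\<^sub>M Q)" for k l by simp
  have Gm[measurable]: "G \<in> borel_measurable (P \<Otimes>\<^sub>M Q)"
    unfolding G_def by measurable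
  have mfst[measurable]: "fst \<in> P \<Otimes>\<^sub>M Q \<rightarrow>\<^sub>M borel"
    using measurable_fst[of P Q] measurable_cong_sets[OF refl P(2)] by blast
  have msnd[measurable]: "snd \<in> P \<Otimes>\<^sub>M Q \<rightarrow>\<^sub>M borel"
    using measurable_snd[of P Q] measurable_cong_sets[OF refl Q(2)] by blast
  have mdist[measurable]: "(\<lambda>x. ennreal (dist (fst x) (snd x))) \<in> borel_measurable (P \<Otimes>\<^sub>M Q)"
    by measurable
  have sL: "sets L = sets (borel :: ('w\<times>'w) measure)" unfolding L_def using sPQ by simp
  have spL: "space L = UNIV" using sL space_borel_sets by blast
  have pfin: "p k \<noteq> \<top>" "q k \<noteq> \<top>" for k unfolding p_def q_def by (simp_all add: PP.emeasure_finite QQ.emeasure_finite)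
  have decomp: "(\<integral>\<^sup>+xy. G xy * f xy \<partial>(P \<Otimes>\<^sub>M Q)) =
      (\<Sum>k. \<Sum>l. c k l * (\<integral>\<^sup>+xy. indicator (cell e k \<times> cell e l) xy * f xy \<partial>(P \<Otimes>\<^sub>M Q)))"
    if f[measurable]: "f \<in> borel_measurable (P \<Otimes>\<^sub>M Q)" for f
  proof -
    have "(\<integral>\<^sup>+xy. G xy * f xy \<partial>(P \<Otimes>\<^sub>M Q)) =
      (\<integral>\<^sup>+xy. (\<Sum>k. \<Sum>l. c k l * (indicator (cell e k \<times> cell e l) xy * f xy)) \<partial>(P \<Otimes>\<^sub>M Q))"
      unfolding G_def by (simp add: mult.assoc[symmetric])
    also have "\<dots> = (\<Sum>k. \<integral>\<^sup>+xy. (\<Sum>l. c k l * (indicator (cell e k \<times> cell e l) xy * f xy)) \<partial>(P \<Otimes>\<^sub>M Q))"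
      by (rule nn_integral_suminf) measurable
    also have "\<dots> = (\<Sum>k. \<Sum>l. \<integral>\<^sup>+xy. c k l * (indicator (cell e k \<times> cell e l) xy * f xy) \<partial>(P \<Otimes>\<^sub>M Q))"
      by (intro suminf_cong nn_integral_suminf) measurable
    also have "\<dots> = (\<Sum>k. \<Sum>l. c k l * (\<integral>\<^sup>+xy. indicator (cell e k \<times> cell e l) xy * f xy \<partial>(P \<Otimes>\<^sub>M Q)))"
      by (intro suminf_cong nn_integral_cmult) measurable
    finally show ?thesis .
  qed
  have emL: "emeasure L S = (\<Sum>k. \<Sum>l. c k l * emeasure (P \<Otimes>\<^sub>M Q) ((cell e k \<times> cell e l) \<inter> S))"
    if S[measurable]: "S \<in> sets (P \<Otimes>\<^sub>M Q)" for S
  proof -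
    have "emeasure L S = (\<integral>\<^sup>+xy. G xy * indicator S xy \<partial>(P \<Otimes>\<^sub>M Q))"
      unfolding L_def by (simp add: emeasure_density nn_integral_set_ennreal)
    also have "\<dots> = (\<Sum>k. \<Sum>l. c k l * (\<integral>\<^sup>+xy. indicator (cell e k \<times> cell e l) xy * indicator S xy \<partial>(P \<Otimes>\<^sub>M Q)))"
      by (rule decomp) measurable
    also have "\<dots> = (\<Sum>k. \<Sum>l. c k l * emeasure (P \<Otimes>\<^sub>M Q) ((cell e k \<times> cell e l) \<inter> S))"
      by (intro suminf_cong arg_cong2[where f="(*)"] refl)
         (simp add: indicator_inter_arith[symmetric] nn_integral_indicator)
    finally show ?thesis .
  qed
  have fstm: "emeasure L (A \<times> UNIV) = emeasure P A" if A: "A \<in> sets borel" for A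
  proof -
    have AP[measurable]: "A \<in> sets P" using A P by simp
    have "emeasure L (A \<times> UNIV) = (\<Sum>k. \<Sum>l. c k l * emeasure (P \<Otimes>\<^sub>M Q) ((A \<inter> cell e k) \<times> cell e l))"
    proof -
      have "A \<times> UNIV \<in> sets (P \<Otimes>\<^sub>M Q)" using pair_measureI[OF AP sets.top[of Q]] sP by simp
      then show ?thesis using emL[of "A \<times> UNIV"] by (simp add: Times_Int_Times Int_commute)
    qed
    also have "\<dots> = (\<Sum>k. \<Sum>l. c k l * (emeasure P (A \<inter> cell e k) * q l))"
      by (intro suminf_cong arg_cong2[where f="(*)"] refl)
         (simp add: QQ.emeasure_pair_measure_Times[OF sets.Int[OF AP cellP(1)] cellP(2)] q_def)
    also have "\<dots> = (\<Sum>k. \<Sum>l. emeasure P (A \<inter> cell e k) * inverse (p k) * th k l)"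
    proof (intro suminf_cong)
      fix k l
      have "th k l * inverse (q l) * q l = th k l"
        by (rule inv_mult_cancel[OF dcoup_le2[OF th'] pfin(2)])
      then show "c k l * (emeasure P (A \<inter> cell e k) * q l) = emeasure P (A \<inter> cell e k) * inverse (p k) * th k l"
        unfolding c_def by (metis (no_types, lifting) mult.assoc mult.commute)
    qed
    also have "\<dots> = (\<Sum>k. emeasure P (A \<inter> cell e k) * inverse (p k) * p k)"
      using th' unfolding dcoup_def by simp
    also have "\<dots> = (\<Sum>k. emeasure P (A \<inter> cell e k))"
      by (intro suminf_cong inv_mult_cancel pfin) (auto simp: p_def intro!: emeasure_mono)
    also have "\<dots> = emeasure P A" by (rule cell_mass_sum_inter[OF P(2) e A])
    finally show ?thesis .
  qed
  have sndm: "emeasure L (UNIV \<times> B) = emeasure Q B" if B: "B \<in> sets borel" for B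
  proof -
    have BQ[measurable]: "B \<in> sets Q" using B Q by simp
    have "emeasure L (UNIV \<times> B) = (\<Sum>k. \<Sum>l. c k l * emeasure (P \<Otimes>\<^sub>M Q) (cell e k \<times> (B \<inter> cell e l)))"
    proof -
      have "UNIV \<times> B \<in> sets (P \<Otimes>\<^sub>M Q)" using pair_measureI[OF sets.top[of P] BQ] sP by simp
      then show ?thesis using emL[of "UNIV \<times> B"] by (simp add: Times_Int_Times Int_commute)
    qed
    also have "\<dots> = (\<Sum>k. \<Sum>l. c k l * (p k * emeasure Q (B \<inter> cell e l)))"
      by (intro suminf_cong arg_cong2[where f="(*)"] refl)
         (simp add: QQ.emeasure_pair_measure_Times[OF cellP(1) sets.Int[OF BQ cellP(2)]] p_def)
    also have "\<dots> = (\<Sum>k. \<Sum>l. emeasure Q (B \<inter> cell e l) * inverse (q l) * th k l)"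
    proof (intro suminf_cong)
      fix k l
      have "th k l * inverse (p k) * p k = th k l"
        by (rule inv_mult_cancel[OF dcoup_le1[OF th'] pfin(1)])
      then show "c k l * (p k * emeasure Q (B \<inter> cell e l)) = emeasure Q (B \<inter> cell e l) * inverse (q l) * th k l"
        unfolding c_def by (metis (no_types, lifting) mult.assoc mult.commute)
    qed
    also have "\<dots> = (\<Sum>l. \<Sum>k. emeasure Q (B \<inter> cell e l) * inverse (q l) * th k l)"
      by (rule suminf_swap_ennreal)
    also have "\<dots> = (\<Sum>l. emeasure Q (B \<inter> cell e l) * inverse (q l) * q l)"
      using th' unfolding dcoup_def by simp
    also have "\<dots> = (\<Sum>l. emeasure Q (B \<inter> cell e l))"
      by (intro suminf_cong inv_mult_cancel pfin) (auto simp: q_def intro!: emeasure_mono)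
    also have "\<dots> = emeasure Q B" by (rule cell_mass_sum_inter[OF Q(2) e B])
    finally show ?thesis .
  qed
  have probL: "prob_space L"
  proof
    show "emeasure L (space L) = 1" using fstm[of UNIV] spL PP.emeasure_space_1 sP by simp
  qed
  have fstL: "distr L borel fst = P"
  proof (rule measure_eqI)
    show "sets (distr L borel fst) = sets P" using P by simp
    fix A assume "A \<in> sets (distr L borel fst)"
    then have A: "A \<in> sets borel" by simp
    have mf: "fst \<in> L \<rightarrow>\<^sub>M borel" using sL by (simp add: measurable_cong_sets[OF sL refl] borel_prod[symmetric])
    have "emeasure (distr L borel fst) A = emeasure L (fst -` A \<inter> space L)"
      by (rule emeasure_distr[OF mf A])
    also have "fst -` A \<inter> space L = A \<times> UNIV" using spL by auto
    finally show "emeasure (distr L borel fst) A = emeasure P A" using fstm[OF A] by simp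
  qed
  have sndL: "distr L borel snd = Q"
  proof (rule measure_eqI)
    show "sets (distr L borel snd) = sets Q" using Q by simp
    fix A assume "A \<in> sets (distr L borel snd)"
    then have A: "A \<in> sets borel" by simp
    have mf: "snd \<in> L \<rightarrow>\<^sub>M borel" using sL by (simp add: measurable_cong_sets[OF sL refl] borel_prod[symmetric])
    have "emeasure (distr L borel snd) A = emeasure L (snd -` A \<inter> space L)"
      by (rule emeasure_distr[OF mf A])
    also have "snd -` A \<inter> space L = UNIV \<times> A" using spL by auto
    finally show "emeasure (distr L borel snd) A = emeasure Q A" using sndm[OF A] by simp
  qed
  have Lc: "L \<in> couplings P Q" unfolding couplings_def using probL sL fstL sndL by blast
  have "wasserstein1 P Q \<le> (\<integral>\<^sup>+ x. ennreal (dist (fst x) (snd x)) \<partial>L)"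
    unfolding wasserstein1_def using Lc by (rule INF_lower)
  also have "\<dots> = (\<integral>\<^sup>+xy. G xy * ennreal (dist (fst xy) (snd xy)) \<partial>(P \<Otimes>\<^sub>M Q))"
    unfolding L_def by (rule nn_integral_density[OF Gm mdist])
  also have "\<dots> = (\<Sum>k. \<Sum>l. c k l * (\<integral>\<^sup>+xy. indicator (cell e k \<times> cell e l) xy * ennreal (dist (fst xy) (snd xy)) \<partial>(P \<Otimes>\<^sub>M Q)))"
    by (rule decomp[OF mdist])
  also have "\<dots> \<le> (\<Sum>k. \<Sum>l. th k l * ennreal (Dm (dseq::nat\<Rightarrow>'w) k l + 2 * e))"
  proof (intro suminf_le allI)
    fix k l
    have "(\<integral>\<^sup>+xy. indicator (cell e k \<times> cell e l) xy * ennreal (dist (fst xy) (snd xy)) \<partial>(P \<Otimes>\<^sub>M Q))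
        \<le> (\<integral>\<^sup>+xy. ennreal (Dm (dseq::nat\<Rightarrow>'w) k l + 2 * e) * indicator (cell e k \<times> cell e l) xy \<partial>(P \<Otimes>\<^sub>M Q))"
      by (intro nn_integral_mono) (auto simp: indicator_def intro!: ennreal_leI cell_dist_le)
    also have "\<dots> = ennreal (Dm (dseq::nat\<Rightarrow>'w) k l + 2 * e) * (p k * q l)"
      by (simp add: nn_integral_cmult_indicator QQ.emeasure_pair_measure_Times p_def q_def)
    finally have "c k l * (\<integral>\<^sup>+xy. indicator (cell e k \<times> cell e l) xy * ennreal (dist (fst xy) (snd xy)) \<partial>(P \<Otimes>\<^sub>M Q))
        \<le> c k l * (ennreal (Dm (dseq::nat\<Rightarrow>'w) k l + 2 * e) * (p k * q l))"
      by (rule mult_left_mono) simp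
    also have "c k l * (ennreal (Dm (dseq::nat\<Rightarrow>'w) k l + 2 * e) * (p k * q l))
       = (th k l * inverse (p k) * p k) * inverse (q l) * q l * ennreal (Dm (dseq::nat\<Rightarrow>'w) k l + 2 * e)"
      unfolding c_def by (simp add: ac_simps)
    also have "\<dots> = th k l * ennreal (Dm (dseq::nat\<Rightarrow>'w) k l + 2 * e)"
      using inv_mult_cancel[OF dcoup_le1[OF th'] pfin(1)] inv_mult_cancel[OF dcoup_le2[OF th'] pfin(2)]
      by simp
    finally show "c k l * (\<integral>\<^sup>+xy. indicator (cell e k \<times> cell e l) xy * ennreal (dist (fst xy) (snd xy)) \<partial>(P \<Otimes>\<^sub>M Q))
        \<le> th k l * ennreal (Dm (dseq::nat\<Rightarrow>'w) k l + 2 * e)" .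
  qed auto
  also have "\<dots> = (\<Sum>k. \<Sum>l. th k l * ennreal (Dm (dseq::nat\<Rightarrow>'w) k l) + th k l * ennreal (2 * e))"
    using e by (intro suminf_cong) (simp add: ennreal_plus Dm_def distrib_left)
  also have "\<dots> = dcost (Dm (dseq::nat\<Rightarrow>'w)) th + (\<Sum>k. \<Sum>l. th k l) * ennreal (2 * e)"
    unfolding dcost_def by (simp add: suminf_add[symmetric])
  also have "(\<Sum>k. \<Sum>l. th k l) = 1"
    using dcoup_total[OF th'] cell_mass_sum[OF P e] unfolding p_def by simp
  finally show ?thesis by simp
qed

lemma coupling_facts:
  fixes P Q :: "'w::polish_space measure"
  assumes R: "R \<in> couplings P Q"
  shows "prob_space R" "sets R = sets (borel :: ('w\<times>'w) measure)" "distr R borel fst = P" "distr R borel snd = Q"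
  using R unfolding couplings_def by auto

lemma coupling_disc:
  fixes P Q :: "'w::polish_space measure"
  assumes R: "R \<in> couplings P Q" and e: "0 < e"
  shows "dcoup (\<lambda>k l. emeasure R (cell e k \<times> cell e l)) (\<lambda>k. emeasure P (cell e k)) (\<lambda>l. emeasure Q (cell e l))"
    and "dcost (Dm (dseq::nat\<Rightarrow>'w)) (\<lambda>k l. emeasure R (cell e k \<times> cell e l))
           \<le> (\<integral>\<^sup>+x. ennreal (dist (fst x) (snd x)) \<partial>R) + ennreal (2*e)"
proof -
  note Rf = coupling_facts[OF R]
  interpret RR: prob_space R by (rule Rf(1))
  have sR: "sets R = sets (borel \<Otimes>\<^sub>M borel :: ('w\<times>'w) measure)" using Rf(2) borel_prod by metis
  have spR: "space R = UNIV" using Rf(2) space_borel_sets by blast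
  have cR[measurable]: "cell e k \<times> cell e l \<in> sets R" for k l unfolding sR by simp
  have mfst[measurable]: "fst \<in> R \<rightarrow>\<^sub>M borel"
    using measurable_fst[of borel borel] measurable_cong_sets[OF sR refl] by blast
  have msnd[measurable]: "snd \<in> R \<rightarrow>\<^sub>M borel"
    using measurable_snd[of borel borel] measurable_cong_sets[OF sR refl] by blast
  have row: "(\<Sum>l. emeasure R (cell e k \<times> cell e l)) = emeasure P (cell e k)" for k
  proof -
    have "(\<Sum>l. emeasure R (cell e k \<times> cell e l)) = emeasure R (\<Union>l. cell e k \<times> cell e l)"
    proof (rule suminf_emeasure)
      show "range (\<lambda>l. cell e k \<times> cell e l) \<subseteq> sets R" using cR by blast
      show "disjoint_family (\<lambda>l. cell e k \<times> cell e l)"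
        using cell_disj[of e] unfolding disjoint_family_on_def by blast
    qed
    also have "(\<Union>l. cell e k \<times> cell e l) = fst -` cell e k \<inter> space R"
      using cell_cover[OF e] spR by auto
    also have "emeasure R \<dots> = emeasure (distr R borel fst) (cell e k)"
      by (rule emeasure_distr[symmetric]) simp_all
    finally show ?thesis using Rf(3) by simp
  qed
  have col: "(\<Sum>k. emeasure R (cell e k \<times> cell e l)) = emeasure Q (cell e l)" for l
  proof -
    have "(\<Sum>k. emeasure R (cell e k \<times> cell e l)) = emeasure R (\<Union>k. cell e k \<times> cell e l)"
    proof (rule suminf_emeasure)
      show "range (\<lambda>k. cell e k \<times> cell e l) \<subseteq> sets R" using cR by blast
      show "disjoint_family (\<lambda>k. cell e k \<times> cell e l)"
        using cell_disj[of e] unfolding disjoint_family_on_def by blast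
    qed
    also have "(\<Union>k. cell e k \<times> cell e l) = snd -` cell e l \<inter> space R"
      using cell_cover[OF e] spR by auto
    also have "emeasure R \<dots> = emeasure (distr R borel snd) (cell e l)"
      by (rule emeasure_distr[symmetric]) simp_all
    finally show ?thesis using Rf(4) by simp
  qed
  show "dcoup (\<lambda>k l. emeasure R (cell e k \<times> cell e l)) (\<lambda>k. emeasure P (cell e k)) (\<lambda>l. emeasure Q (cell e l))"
    unfolding dcoup_def using row col by simp
  have pt: "(\<Sum>k. \<Sum>l. indicator (cell e k \<times> cell e l) xy * ennreal (Dm (dseq::nat\<Rightarrow>'w) k l))
      \<le> ennreal (dist (fst xy) (snd xy)) + ennreal (2*e)" for xy :: "'w \<times> 'w"
  proof -
    obtain x y where xy: "xy = (x, y)" by (cases xy)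
    obtain k0 where k0: "x \<in> cell e k0" using cell_cover[OF e] by blast
    obtain l0 where l0: "y \<in> cell e l0" using cell_cover[OF e] by blast
    have "(\<Sum>k. \<Sum>l. indicator (cell e k \<times> cell e l) xy * ennreal (Dm (dseq::nat\<Rightarrow>'w) k l))
        = (\<Sum>k. (\<Sum>l. ennreal (Dm (dseq::nat\<Rightarrow>'w) k l) * indicator (cell e l) y) * indicator (cell e k) x)"
    proof (intro suminf_cong)
      fix k
      have "(\<Sum>l. indicator (cell e k \<times> cell e l) xy * ennreal (Dm (dseq::nat\<Rightarrow>'w) k l))
          = (\<Sum>l. (ennreal (Dm (dseq::nat\<Rightarrow>'w) k l) * indicator (cell e l) y) * indicator (cell e k) x)"
        unfolding xy by (intro suminf_cong) (simp add: indicator_times ac_simps)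
      then show "(\<Sum>l. indicator (cell e k \<times> cell e l) xy * ennreal (Dm (dseq::nat\<Rightarrow>'w) k l))
          = (\<Sum>l. ennreal (Dm (dseq::nat\<Rightarrow>'w) k l) * indicator (cell e l) y) * indicator (cell e k) x"
        by (simp only: ennreal_suminf_multc)
    qed
    also have "\<dots> = (\<Sum>k. ennreal (Dm (dseq::nat\<Rightarrow>'w) k l0) * indicator (cell e k) x)"
      by (simp add: suminf_cmult_indicator[OF cell_disj l0])
    also have "\<dots> = ennreal (Dm (dseq::nat\<Rightarrow>'w) k0 l0)"
      by (simp add: suminf_cmult_indicator[OF cell_disj k0])
    also have "\<dots> \<le> ennreal (dist x y + 2 * e)"
      by (rule ennreal_leI[OF cell_D_le[OF k0 l0]])
    also have "\<dots> = ennreal (dist (fst xy) (snd xy)) + ennreal (2*e)"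
      unfolding xy using e by (simp add: ennreal_plus)
    finally show ?thesis .
  qed
  have "dcost (Dm (dseq::nat\<Rightarrow>'w)) (\<lambda>k l. emeasure R (cell e k \<times> cell e l))
      = (\<Sum>k. \<Sum>l. \<integral>\<^sup>+xy. indicator (cell e k \<times> cell e l) xy * ennreal (Dm (dseq::nat\<Rightarrow>'w) k l) \<partial>R)"
    unfolding dcost_def by (intro suminf_cong) (simp add: nn_integral_multc)
  also have "\<dots> = (\<Sum>k. \<integral>\<^sup>+xy. (\<Sum>l. indicator (cell e k \<times> cell e l) xy * ennreal (Dm (dseq::nat\<Rightarrow>'w) k l)) \<partial>R)"
    by (intro suminf_cong nn_integral_suminf[symmetric]) measurable
  also have "\<dots> = (\<integral>\<^sup>+xy. (\<Sum>k. \<Sum>l. indicator (cell e k \<times> cell e l) xy * ennreal (Dm (dseq::nat\<Rightarrow>'w) k l)) \<partial>R)"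
    by (intro nn_integral_suminf[symmetric]) measurable
  also have "\<dots> \<le> (\<integral>\<^sup>+xy. ennreal (dist (fst xy) (snd xy)) + ennreal (2*e) \<partial>R)"
    by (intro nn_integral_mono pt)
  also have "\<dots> = (\<integral>\<^sup>+xy. ennreal (dist (fst xy) (snd xy)) \<partial>R) + ennreal (2*e)"
    by (subst nn_integral_add) (auto simp: RR.emeasure_space_1)
  finally show "dcost (Dm (dseq::nat\<Rightarrow>'w)) (\<lambda>k l. emeasure R (cell e k \<times> cell e l))
           \<le> (\<integral>\<^sup>+x. ennreal (dist (fst x) (snd x)) \<partial>R) + ennreal (2*e)" .
qed

definition amat :: "nat \<times> rat list \<Rightarrow> nat \<Rightarrow> nat \<Rightarrow> ennreal" where
  "amat a k l = (if k < fst a \<and> l < fst a then ennreal (real_of_rat (snd a ! (k * fst a + l))) else 0)"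
definition rowA :: "nat \<times> rat list \<Rightarrow> nat \<Rightarrow> ennreal" where "rowA a k = (\<Sum>l<fst a. amat a k l)"
definition colA :: "nat \<times> rat list \<Rightarrow> nat \<Rightarrow> ennreal" where "colA a l = (\<Sum>k<fst a. amat a k l)"
definition feas :: "nat \<times> rat list \<Rightarrow> (nat \<Rightarrow> ennreal) \<Rightarrow> (nat \<Rightarrow> ennreal) \<Rightarrow> bool" where
  "feas a p q \<longleftrightarrow> (\<forall>k. rowA a k \<le> p k) \<and> (\<forall>l. colA a l \<le> q l)"
definition thA :: "nat \<times> rat list \<Rightarrow> (nat \<Rightarrow> ennreal) \<Rightarrow> (nat \<Rightarrow> ennreal) \<Rightarrow> nat \<Rightarrow> nat \<Rightarrow> ennreal" where
  "thA a p q k l = (if feas a p q then amat a k l + (p k - rowA a k) * (q l - colA a l) * inverse (\<Sum>k. p k - rowA a k)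
                    else p k * q l)"

lemma rowA_sum: "(\<Sum>l. amat a k l) = rowA a k"
  unfolding rowA_def by (rule suminf_finite) (auto simp: amat_def)
lemma colA_sum: "(\<Sum>k. amat a k l) = colA a l"
  unfolding colA_def by (rule suminf_finite) (auto simp: amat_def)
lemma rowA_tot: "(\<Sum>k. rowA a k) = (\<Sum>k<fst a. \<Sum>l<fst a. amat a k l)"
  unfolding rowA_def by (rule suminf_finite) (auto simp: amat_def)
lemma colA_tot: "(\<Sum>l. colA a l) = (\<Sum>k<fst a. \<Sum>l<fst a. amat a k l)"
  unfolding colA_def by (subst suminf_finite[of "{..<fst a}"]) (auto simp: amat_def intro: sum.swap)

lemma amat_fin: "(\<Sum>k<fst a. \<Sum>l<fst a. amat a k l) \<noteq> \<top>"
  by (simp add: amat_def)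

lemma sum_minus_eq:
  fixes f g :: "nat \<Rightarrow> ennreal"
  assumes "\<And>k. g k \<le> f k" "(\<Sum>k. f k) = 1" "(\<Sum>k. g k) = t" "t \<noteq> \<top>"
  shows "(\<Sum>k. f k - g k) + t = 1"
proof -
  have "(\<Sum>k. f k - g k) + (\<Sum>k. g k) = (\<Sum>k. f k - g k + g k)"
    by (simp add: suminf_add)
  also have "\<dots> = (\<Sum>k. f k)" using assms(1) by (simp add: diff_add_cancel_ennreal)
  finally show ?thesis using assms by simp
qed

lemma thA_coup:
  assumes p1: "(\<Sum>k. p k) = 1" and q1: "(\<Sum>l. q l) = 1"
  shows "dcoup (thA a p q) p q"
proof (cases "feas a p q")
  case False
  then show ?thesis unfolding dcoup_def thA_def using p1 q1
    by (simp add: ennreal_suminf_cmult ennreal_suminf_multc)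
next
  case True
  define r where "r k = p k - rowA a k" for k
  define s where "s l = q l - colA a l" for l
  define S where "S = (\<Sum>k. r k)"
  define tot where "tot = (\<Sum>k<fst a. \<Sum>l<fst a. amat a k l)"
  have fr: "rowA a k \<le> p k" "colA a k \<le> q k" for k using True unfolding feas_def by auto
  have "S + tot = 1" unfolding S_def r_def tot_def
    by (rule sum_minus_eq[OF fr(1) p1 rowA_tot amat_fin])
  moreover have "(\<Sum>l. s l) + tot = 1" unfolding s_def tot_def
    by (rule sum_minus_eq[OF fr(2) q1 colA_tot amat_fin])
  ultimately have sS: "(\<Sum>l. s l) = S"
    using amat_fin[of a] unfolding tot_def by (metis ennreal_add_diff_cancel_right)
  have Sfin: "S \<noteq> \<top>" using \<open>S + tot = 1\<close> by (metis ennreal_add_eq_top ennreal_one_neq_top)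
  have rS: "r k \<le> S" for k unfolding S_def by (rule my_le_suminf)
  have sS': "s l \<le> S" for l unfolding sS[symmetric] by (rule my_le_suminf)
  have th: "thA a p q k l = amat a k l + r k * s l * inverse S" for k l
    unfolding thA_def r_def s_def S_def using True by simp
  have row: "(\<Sum>l. thA a p q k l) = p k" for k
  proof -
    have "(\<Sum>l. thA a p q k l) = (\<Sum>l. amat a k l) + (\<Sum>l. r k * inverse S * s l)"
      unfolding th by (simp add: suminf_add[symmetric] ac_simps)
    also have "\<dots> = rowA a k + r k * inverse S * S"
      by (simp add: rowA_sum sS)
    also have "\<dots> = rowA a k + r k" by (simp add: inv_mult_cancel[OF rS Sfin])
    also have "\<dots> = p k" unfolding r_def using fr(1)[of k]
      by (simp add: add.commute diff_add_cancel_ennreal)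
    finally show ?thesis .
  qed
  have col: "(\<Sum>k. thA a p q k l) = q l" for l
  proof -
    have "(\<Sum>k. thA a p q k l) = (\<Sum>k. amat a k l) + (\<Sum>k. r k * (s l * inverse S))"
      unfolding th by (simp add: suminf_add[symmetric] ac_simps)
    also have "\<dots> = colA a l + s l * inverse S * S"
      by (simp add: colA_sum S_def[symmetric] ac_simps)
    also have "\<dots> = colA a l + s l" by (simp add: inv_mult_cancel[OF sS' Sfin])
    also have "\<dots> = q l" unfolding s_def using fr(2)[of l]
      by (simp add: add.commute diff_add_cancel_ennreal)
    finally show ?thesis .
  qed
  show ?thesis unfolding dcoup_def using row col by simp
qed

lemma thA_feas_cost:
  assumes F: "feas a p q" and p1: "(\<Sum>k. p k) = 1" and q1: "(\<Sum>l. q l) = 1"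
    and TD: "\<And>k l. TD k l \<le> M"
  shows "dcost TD (thA a p q) \<le> dcost TD (amat a) + (\<Sum>k. p k - rowA a k) * ennreal M"
proof -
  define r where "r k = p k - rowA a k" for k
  define s where "s l = q l - colA a l" for l
  define S where "S = (\<Sum>k. r k)"
  define tot where "tot = (\<Sum>k<fst a. \<Sum>l<fst a. amat a k l)"
  have fr: "rowA a k \<le> p k" "colA a k \<le> q k" for k using F unfolding feas_def by auto
  have "S + tot = 1" unfolding S_def r_def tot_def
    by (rule sum_minus_eq[OF fr(1) p1 rowA_tot amat_fin])
  moreover have "(\<Sum>l. s l) + tot = 1" unfolding s_def tot_def
    by (rule sum_minus_eq[OF fr(2) q1 colA_tot amat_fin])
  ultimately have sS: "(\<Sum>l. s l) = S"
    using amat_fin[of a] unfolding tot_def by (metis ennreal_add_diff_cancel_right)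
  have Sfin: "S \<noteq> \<top>" using \<open>S + tot = 1\<close> by (metis ennreal_add_eq_top ennreal_one_neq_top)
  have th: "thA a p q k l = amat a k l + r k * s l * inverse S" for k l
    unfolding thA_def r_def s_def S_def using F by simp
  have "dcost TD (thA a p q) = (\<Sum>k. \<Sum>l. amat a k l * ennreal (TD k l) + r k * s l * inverse S * ennreal (TD k l))"
    unfolding dcost_def th by (simp add: distrib_right)
  also have "\<dots> = dcost TD (amat a) + (\<Sum>k. \<Sum>l. r k * s l * inverse S * ennreal (TD k l))"
    unfolding dcost_def by (simp add: suminf_add[symmetric])
  also have "(\<Sum>k. \<Sum>l. r k * s l * inverse S * ennreal (TD k l)) \<le> (\<Sum>k. \<Sum>l. r k * s l * inverse S * ennreal M)"
    by (intro suminf_le allI mult_left_mono ennreal_leI TD) auto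
  also have "(\<Sum>k. \<Sum>l. r k * s l * inverse S * ennreal M) = S * (\<Sum>l. s l) * inverse S * ennreal M"
    unfolding S_def by (simp add: ennreal_suminf_multc ennreal_suminf_cmult ac_simps)
  also have "\<dots> = S * ennreal M"
    unfolding sS using inv_mult_cancel[OF order_refl Sfin] by (simp add: ac_simps)
  finally show ?thesis unfolding S_def r_def by (simp add: add_left_mono)
qed

lemma dsum_SUP: "(\<Sum>k. \<Sum>l. th k l :: ennreal) = (SUP a. SUP b. \<Sum>k<a. \<Sum>l<b. th k l)"
proof -
  have "(\<Sum>k. \<Sum>l. th k l) = (SUP a. \<Sum>k<a. \<Sum>l. th k l)" by (rule suminf_eq_SUP)
  also have "\<dots> = (SUP a. \<Sum>l. \<Sum>k<a. th k l)"
    by (subst suminf_sum[OF summableI]) simp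
  also have "\<dots> = (SUP a. SUP b. \<Sum>l<b. \<Sum>k<a. th k l)" by (simp add: suminf_eq_SUP)
  also have "\<dots> = (SUP a. SUP b. \<Sum>k<a. \<Sum>l<b. th k l)" by (intro SUP_cong refl sum.swap)
  finally show ?thesis .
qed

lemma amat_eval:
  assumes "k < N" "l < N"
  shows "amat (N, map (\<lambda>j. r (j div N) (j mod N)) [0..<N*N]) k l = ennreal (real_of_rat (r k l))"
proof -
  have lt: "k * N + l < N * N"
  proof -
    have "k * N + l < Suc k * N" using assms by simp
    also have "Suc k * N \<le> N * N" using assms by (intro mult_le_mono1) simp
    finally show ?thesis .
  qed
  have "(k * N + l) div N = k" "(k * N + l) mod N = l" using assms by auto
  then show ?thesis using assms lt unfolding amat_def by simp
qed

lemma dcost_mono_th: "(\<And>k l. th1 k l \<le> th2 k l) \<Longrightarrow> dcost D th1 \<le> dcost D th2"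
  unfolding dcost_def by (intro suminf_le allI mult_right_mono) auto

lemma thA_dense:
  fixes D :: "nat \<Rightarrow> nat \<Rightarrow> real" and M \<delta> :: real
  assumes th: "dcoup \<theta> p q" and p1: "(\<Sum>k. p k) = 1" and q1: "(\<Sum>l. q l) = 1"
    and \<delta>: "0 < \<delta>" and M: "0 \<le> M"
  shows "\<exists>a. dcost (\<lambda>k l. min (D k l) M) (thA a p q) \<le> dcost (\<lambda>k l. min (D k l) M) \<theta> + ennreal \<delta>"
proof -
  define TD where "TD k l = min (D k l) M" for k l
  define d where "d = \<delta> / (M + 1)"
  have d0: "0 < d" unfolding d_def using \<delta> M by simp
  have dM: "d * M \<le> \<delta>"
  proof -
    have "d * M = \<delta> * (M / (M + 1))" unfolding d_def by simp
    also have "\<dots> \<le> \<delta> * 1" using \<delta> M by (intro mult_left_mono) auto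
    finally show ?thesis by simp
  qed
  have tot1: "(\<Sum>k. \<Sum>l. \<theta> k l) = 1" using dcoup_total[OF th] p1 by simp
  have thle: "\<theta> k l \<le> 1" for k l
    using dcoup_le1[OF th, of k l] my_le_suminf[of p k] p1 by simp
  define t where "t k l = enn2real (\<theta> k l)" for k l
  have tt: "\<theta> k l = ennreal (t k l)" for k l
    unfolding t_def using thle[of k l] by (simp add: order_le_less_trans[OF _ ennreal_one_less_top])
  have t0: "0 \<le> t k l" for k l unfolding t_def by simp
  have "ennreal (1 - d/2) < 1"
  proof (cases "1 - d/2 \<le> 0")
    case True then show ?thesis by (simp add: ennreal_eq_0_iff)
  next
    case False then show ?thesis using d0 ennreal_less_iff[of "1 - d/2" 1] by simp
  qed
  then have "ennreal (1 - d/2) < (SUP a. SUP b. \<Sum>k<a. \<Sum>l<b. \<theta> k l)" using tot1 dsum_SUP[of \<theta>] by simp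
  then obtain a0 b0 where ab: "ennreal (1 - d/2) < (\<Sum>k<a0. \<Sum>l<b0. \<theta> k l)" by (auto simp: less_SUP_iff)
  define N where "N = max a0 b0"
  have "(\<Sum>k<a0. \<Sum>l<b0. \<theta> k l) \<le> (\<Sum>k<a0. \<Sum>l<N. \<theta> k l)"
    unfolding N_def by (intro sum_mono sum_mono2) auto
  also have "\<dots> \<le> (\<Sum>k<N. \<Sum>l<N. \<theta> k l)"
    unfolding N_def by (intro sum_mono2) auto
  also have "\<dots> = ennreal (\<Sum>k<N. \<Sum>l<N. t k l)" unfolding tt using t0 by (simp add: sum_nonneg)
  finally have "ennreal (1 - d/2) < ennreal (\<Sum>k<N. \<Sum>l<N. t k l)" using ab by simp
  then have tsum: "1 - d/2 < (\<Sum>k<N. \<Sum>l<N. t k l)"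
  proof (cases "1 - d/2 < 0")
    case True
    have "0 \<le> (\<Sum>k<N. \<Sum>l<N. t k l)" using t0 by (simp add: sum_nonneg)
    then show ?thesis using True by linarith
  next
    case False
    then show ?thesis using \<open>ennreal (1 - d/2) < ennreal (\<Sum>k<N. \<Sum>l<N. t k l)\<close> ennreal_less_iff by simp
  qed
  define K :: nat where "K = nat \<lceil>2 * real (N*N) / d\<rceil> + 1"
  have K0: "0 < real K" unfolding K_def by simp
  have KN: "real (N*N) / real K \<le> d/2"
  proof -
    have "2 * real (N*N) / d \<le> real K" unfolding K_def by linarith
    then have "2 * real (N*N) \<le> real K * d" using d0 by (simp add: field_simps)
    then show ?thesis using K0 d0 by (simp add: field_simps)
  qed
  define r where "r k l = (of_int \<lfloor>t k l * real K\<rfloor> / of_nat K :: rat)" for k l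
  have rr: "real_of_rat (r k l) = of_int \<lfloor>t k l * real K\<rfloor> / real K" for k l
    unfolding r_def by (simp add: of_rat_divide)
  have r_le: "real_of_rat (r k l) \<le> t k l" for k l
    unfolding rr using K0 by (simp add: divide_le_eq)
  have r_ge: "t k l - 1 / real K \<le> real_of_rat (r k l)" for k l
  proof -
    have "t k l * real K - 1 \<le> of_int \<lfloor>t k l * real K\<rfloor>" by linarith
    then have "(t k l * real K - 1) / real K \<le> of_int \<lfloor>t k l * real K\<rfloor> / real K"
      using K0 by (intro divide_right_mono) auto
    moreover have "(t k l * real K - 1) / real K = t k l - 1 / real K" using K0 by (simp add: field_simps)
    ultimately show ?thesis unfolding rr by simp
  qed
  have r_nn: "0 \<le> real_of_rat (r k l)" for k l unfolding rr using t0[of k l] K0 by simp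
  define a where "a = (N, map (\<lambda>j. r (j div N) (j mod N)) [0..<N*N])"
  have am: "amat a k l = (if k < N \<and> l < N then ennreal (real_of_rat (r k l)) else 0)" for k l
    using amat_eval[of k N l r] unfolding a_def by (auto simp: amat_def)
  have am_le: "amat a k l \<le> \<theta> k l" for k l using am tt r_le by (auto intro: ennreal_leI)
  have fa: "fst a = N" by (simp add: a_def)
  have F: "feas a p q" unfolding feas_def
  proof (intro conjI allI)
    fix k
    have "rowA a k \<le> (\<Sum>l<N. \<theta> k l)" unfolding rowA_def fa using am_le by (simp add: sum_mono)
    also have "\<dots> \<le> (\<Sum>l. \<theta> k l)" by (intro sum_le_suminf summableI) auto
    finally show "rowA a k \<le> p k" using th unfolding dcoup_def by simp
  next
    fix l
    have "colA a l \<le> (\<Sum>k<N. \<theta> k l)" unfolding colA_def fa using am_le by (simp add: sum_mono)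
    also have "\<dots> \<le> (\<Sum>k. \<theta> k l)" by (intro sum_le_suminf summableI) auto
    finally show "colA a l \<le> q l" using th unfolding dcoup_def by simp
  qed
  define T where "T = (\<Sum>k<N. \<Sum>l<N. real_of_rat (r k l))"
  have totT: "(\<Sum>k<fst a. \<Sum>l<fst a. amat a k l) = ennreal T"
    unfolding T_def using am r_nn by (simp add: a_def sum_nonneg)
  have Tbig: "1 - d < T"
  proof -
    have "(\<Sum>k<N. \<Sum>l<N. t k l - 1 / real K) \<le> T" unfolding T_def
      by (intro sum_mono r_ge)
    moreover have "(\<Sum>k<N. \<Sum>l<N. t k l - 1 / real K) = (\<Sum>k<N. \<Sum>l<N. t k l) - real (N*N) / real K"
      by (simp add: sum_subtractf)
    ultimately show ?thesis using tsum KN by linarith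
  qed
  define S where "S = (\<Sum>k. p k - rowA a k)"
  have fr: "rowA a k \<le> p k" for k using F unfolding feas_def by auto
  have ST: "S + ennreal T = 1" unfolding S_def totT[symmetric]
    by (rule sum_minus_eq[OF fr p1 rowA_tot amat_fin])
  have Sd: "S \<le> ennreal d"
  proof -
    have "ennreal T + S = 1" using ST by (simp add: add.commute)
    also have "(1::ennreal) \<le> ennreal T + ennreal d"
    proof -
      have T0: "0 \<le> T" unfolding T_def using r_nn by (simp add: sum_nonneg)
      have "ennreal 1 \<le> ennreal (T + d)" using Tbig by (intro ennreal_leI) simp
      then show ?thesis using T0 d0 by (simp add: ennreal_plus)
    qed
    finally show ?thesis using ennreal_add_left_cancel_le by simp
  qed
  have "dcost TD (thA a p q) \<le> dcost TD (amat a) + S * ennreal M"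
    unfolding S_def by (rule thA_feas_cost[OF F p1 q1]) (simp add: TD_def)
  also have "\<dots> \<le> dcost TD \<theta> + ennreal \<delta>"
  proof (rule add_mono)
    show "dcost TD (amat a) \<le> dcost TD \<theta>" by (rule dcost_mono_th[OF am_le])
    have "S * ennreal M \<le> ennreal d * ennreal M" by (rule mult_right_mono[OF Sd]) simp
    also have "\<dots> = ennreal (d * M)" using d0 assms(5) by (intro ennreal_mult[symmetric]) auto
    also have "\<dots> \<le> ennreal \<delta>" using dM by (rule ennreal_leI)
    finally show "S * ennreal M \<le> ennreal \<delta>" .
  qed
  finally show ?thesis unfolding TD_def by blast
qed

lemma tail_small:
  fixes q :: "nat \<Rightarrow> ennreal"
  assumes q1: "(\<Sum>l. q l) = 1" and e: "0 < e"
  shows "\<exists>L. (\<Sum>l. q (l + L)) < e"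
proof -
  have lim: "(\<lambda>L. (\<Sum>l<L. q l) + e) \<longlonglongrightarrow> 1 + e"
    using summable_LIMSEQ[OF summableI, of q] q1 by (intro tendsto_add) auto
  have "1 < 1 + e" using e by (simp add: ennreal_add_left_cancel_less[of 1 0 e, simplified])
  from order_tendstoD(1)[OF lim this] obtain L where L: "1 < (\<Sum>l<L. q l) + e"
    by (auto simp: eventually_sequentially)
  have split: "(\<Sum>l<L. q l) + (\<Sum>l. q (l + L)) = 1"
    using suminf_offset[OF summableI, of q L] q1 by (simp add: add.commute)
  have fin: "(\<Sum>l<L. q l) \<noteq> \<top>"
    using split by (metis ennreal_add_eq_top ennreal_one_neq_top)
  have "(\<Sum>l<L. q l) + (\<Sum>l. q (l + L)) < (\<Sum>l<L. q l) + e" using split L by simp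
  then show ?thesis using fin ennreal_add_left_cancel_less by blast
qed

lemma lim_row:
  fixes th :: "nat \<Rightarrow> nat \<Rightarrow> nat \<Rightarrow> ennreal"
  assumes conv: "\<And>k l. (\<lambda>j. th j k l) \<longlonglongrightarrow> th' k l"
    and rows: "\<And>j k. (\<Sum>l. th j k l) = p k"
    and bnd: "\<And>j k l. th j k l \<le> q l"
    and q1: "(\<Sum>l. q l) = 1"
  shows "(\<Sum>l. th' k l) = p k"
proof (rule antisym)
  have "(\<Sum>l<L. th' k l) \<le> p k" for L
  proof (rule LIMSEQ_le_const2)
    show "(\<lambda>j. \<Sum>l<L. th j k l) \<longlonglongrightarrow> (\<Sum>l<L. th' k l)" by (intro tendsto_sum conv)
    show "\<exists>N. \<forall>n\<ge>N. (\<Sum>l<L. th n k l) \<le> p k"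
      using rows sum_le_suminf[OF summableI, of "{..<L}" "th _ k"] by auto
  qed
  then show "(\<Sum>l. th' k l) \<le> p k" unfolding suminf_eq_SUP by (intro SUP_least) auto
next
  show "p k \<le> (\<Sum>l. th' k l)"
  proof (rule ennreal_le_epsilon)
    fix e :: real assume e: "0 < e"
    obtain L where L: "(\<Sum>l. q (l + L)) < ennreal e" using tail_small[OF q1, of "ennreal e"] e by auto
    have "p k \<le> (\<Sum>l<L. th' k l) + (\<Sum>l. q (l + L))"
    proof (rule LIMSEQ_le_const)
      show "(\<lambda>j. (\<Sum>l<L. th j k l) + (\<Sum>l. q (l + L))) \<longlonglongrightarrow> (\<Sum>l<L. th' k l) + (\<Sum>l. q (l + L))"
        by (intro tendsto_add tendsto_sum conv tendsto_const)
      show "\<exists>N. \<forall>n\<ge>N. p k \<le> (\<Sum>l<L. th n k l) + (\<Sum>l. q (l + L))"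
      proof (intro exI allI impI)
        fix j :: nat
        have "p k = (\<Sum>l. th j k (l + L)) + (\<Sum>l<L. th j k l)"
          using rows[of j k] suminf_offset[OF summableI, of "th j k" L] by simp
        also have "\<dots> \<le> (\<Sum>l. q (l + L)) + (\<Sum>l<L. th j k l)"
          by (intro add_mono suminf_le allI bnd) auto
        finally show "p k \<le> (\<Sum>l<L. th j k l) + (\<Sum>l. q (l + L))" by (simp add: add.commute)
      qed
    qed
    also have "\<dots> \<le> (\<Sum>l. th' k l) + ennreal e"
      using L by (intro add_mono sum_le_suminf[OF summableI]) auto
    finally show "p k \<le> (\<Sum>l. th' k l) + ennreal e" .
  qed
qed

lemma diag_conv:
  fixes th :: "nat \<Rightarrow> nat \<Rightarrow> nat \<Rightarrow> ennreal"
  shows "\<exists>\<sigma>. strict_mono \<sigma> \<and> (\<forall>k l. convergent (\<lambda>j. th (\<sigma> j) k l))"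
proof -
  define P where "P n s \<longleftrightarrow> convergent (\<lambda>j. th (s j) (fst (prod_decode n)) (snd (prod_decode n)))" for n s
  have ex: "\<exists>r'. strict_mono r' \<and> P n (s \<circ> r')" if "strict_mono s" for n and s :: "nat \<Rightarrow> nat"
  proof -
    obtain f where f: "strict_mono f" "monoseq (\<lambda>j. th (s (f j)) (fst (prod_decode n)) (snd (prod_decode n)))"
      using seq_monosub[of "\<lambda>j. th (s j) (fst (prod_decode n)) (snd (prod_decode n))"] by auto
    have "convergent (\<lambda>j. th (s (f j)) (fst (prod_decode n)) (snd (prod_decode n)))"
    proof -
      have "incseq (\<lambda>j. th (s (f j)) (fst (prod_decode n)) (snd (prod_decode n))) \<or>
            decseq (\<lambda>j. th (s (f j)) (fst (prod_decode n)) (snd (prod_decode n)))"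
        using f(2) by (simp add: monoseq_iff)
      then show ?thesis
      proof
        assume "incseq (\<lambda>j. th (s (f j)) (fst (prod_decode n)) (snd (prod_decode n)))"
        from LIMSEQ_SUP[OF this] show ?thesis by (rule convergentI)
      next
        assume "decseq (\<lambda>j. th (s (f j)) (fst (prod_decode n)) (snd (prod_decode n)))"
        from LIMSEQ_INF[OF this] show ?thesis by (rule convergentI)
      qed
    qed
    then show ?thesis using f(1) unfolding P_def by (auto simp: o_def)
  qed
  interpret subseqs P using ex by unfold_locales auto
  have stable: "P n (s \<circ> r)" if "strict_mono r" "P n s" for r s n
  proof -
    from that(2) obtain L where "(\<lambda>j. th (s j) (fst (prod_decode n)) (snd (prod_decode n))) \<longlonglongrightarrow> L"
      unfolding P_def convergent_def by blast
    from LIMSEQ_subseq_LIMSEQ[OF this that(1)] show ?thesis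
      unfolding P_def convergent_def by (auto simp: o_def)
  qed
  have "convergent (\<lambda>j. th (diagseq j) k l)" for k l
  proof -
    define n where "n = prod_encode (k, l)"
    have "P n (diagseq \<circ> (+) (Suc n))" by (rule diagseq_holds) (rule stable)
    then have "convergent (\<lambda>j. th (diagseq (j + Suc n)) k l)"
      unfolding P_def n_def by (simp add: o_def add.commute)
    then show ?thesis using convergent_ignore_initial_segment[of "\<lambda>j. th (diagseq j) k l" "Suc n"] by simp
  qed
  then show ?thesis using subseq_diagseq by blast
qed

lemma box_le_dsum: "(\<Sum>k<a. \<Sum>l<b. f k l :: ennreal) \<le> (\<Sum>k. \<Sum>l. f k l)"
proof -
  have "(\<Sum>k<a. \<Sum>l<b. f k l) \<le> (\<Sum>k<a. \<Sum>l. f k l)"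
    by (intro sum_mono sum_le_suminf[OF summableI]) auto
  also have "\<dots> \<le> (\<Sum>k. \<Sum>l. f k l)" by (intro sum_le_suminf[OF summableI]) auto
  finally show ?thesis .
qed

lemma diag_limit:
  fixes D :: "nat \<Rightarrow> nat \<Rightarrow> real" and T :: ennreal
  assumes th: "\<And>M::nat. dcoup (\<theta> M) p q"
    and cost: "\<And>M::nat. dcost (\<lambda>k l. min (D k l) (real M)) (\<theta> M) \<le> T"
    and p1: "(\<Sum>k. p k) = 1" and q1: "(\<Sum>l. q l) = 1"
  shows "\<exists>\<theta>'. dcoup \<theta>' p q \<and> dcost D \<theta>' \<le> T"
proof -
  obtain \<sigma> where \<sigma>: "strict_mono \<sigma>" "\<And>k l. convergent (\<lambda>j. \<theta> (\<sigma> j) k l)"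
    using diag_conv[of \<theta>] by blast
  define \<theta>' where "\<theta>' k l = lim (\<lambda>j. \<theta> (\<sigma> j) k l)" for k l
  have conv: "(\<lambda>j. \<theta> (\<sigma> j) k l) \<longlonglongrightarrow> \<theta>' k l" for k l
    unfolding \<theta>'_def using \<sigma>(2) by (simp add: convergent_LIMSEQ_iff)
  have rows: "(\<Sum>l. \<theta>' k l) = p k" for k
    by (rule lim_row[where th="\<lambda>j. \<theta> (\<sigma> j)" and q=q, OF conv _ _ q1])
       (use th in \<open>auto simp: dcoup_def intro: dcoup_le2\<close>)
  have cols: "(\<Sum>k. \<theta>' k l) = q l" for l
    by (rule lim_row[where th="\<lambda>j k l. \<theta> (\<sigma> j) l k" and th'="\<lambda>k l. \<theta>' l k" and q=p, OF conv _ _ p1])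
       (use th in \<open>auto simp: dcoup_def intro: dcoup_le1\<close>)
  have C: "dcoup \<theta>' p q" unfolding dcoup_def using rows cols by simp
  have fin: "\<theta>' k l \<noteq> \<top>" for k l
  proof -
    have "\<theta>' k l \<le> p k" using my_le_suminf[of "\<theta>' k" l] rows[of k] by simp
    also have "p k \<le> 1" using my_le_suminf[of p k] p1 by simp
    finally show ?thesis by (auto simp: top_unique)
  qed
  have box: "(\<Sum>k<a. \<Sum>l<b. \<theta>' k l * ennreal (D k l)) \<le> T" for a b
  proof -
    define Mb :: nat where "Mb = nat \<lceil>\<Sum>k<a. \<Sum>l<b. \<bar>D k l\<bar>\<rceil>"
    have DM: "D k l \<le> real Mb" if "k < a" "l < b" for k l
    proof -
      have "\<bar>D k l\<bar> \<le> (\<Sum>l<b. \<bar>D k l\<bar>)" using that by (intro member_le_sum) auto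
      also have "\<dots> \<le> (\<Sum>k<a. \<Sum>l<b. \<bar>D k l\<bar>)" using that
        by (intro member_le_sum[where f="\<lambda>k. \<Sum>l<b. \<bar>D k l\<bar>"] sum_nonneg) auto
      also have "\<dots> \<le> real Mb" unfolding Mb_def by linarith
      finally show ?thesis by linarith
    qed
    have eq: "(\<Sum>k<a. \<Sum>l<b. \<theta>' k l * ennreal (D k l)) = (\<Sum>k<a. \<Sum>l<b. \<theta>' k l * ennreal (min (D k l) (real Mb)))"
      using DM by (intro sum.cong refl) (simp add: min_def)
    have "(\<Sum>k<a. \<Sum>l<b. \<theta>' k l * ennreal (min (D k l) (real Mb))) \<le> T"
    proof (rule LIMSEQ_le_const2)
      show "(\<lambda>j. \<Sum>k<a. \<Sum>l<b. \<theta> (\<sigma> j) k l * ennreal (min (D k l) (real Mb)))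
          \<longlonglongrightarrow> (\<Sum>k<a. \<Sum>l<b. \<theta>' k l * ennreal (min (D k l) (real Mb)))"
        by (intro tendsto_sum tendsto_mult_ennreal conv tendsto_const) (auto simp: fin)
      show "\<exists>N. \<forall>j\<ge>N. (\<Sum>k<a. \<Sum>l<b. \<theta> (\<sigma> j) k l * ennreal (min (D k l) (real Mb))) \<le> T"
      proof (intro exI allI impI)
        fix j assume j: "Mb \<le> j"
        have sj: "real Mb \<le> real (\<sigma> j)" using j seq_suble[OF \<sigma>(1), of j] by simp
        have "(\<Sum>k<a. \<Sum>l<b. \<theta> (\<sigma> j) k l * ennreal (min (D k l) (real Mb)))
            \<le> (\<Sum>k<a. \<Sum>l<b. \<theta> (\<sigma> j) k l * ennreal (min (D k l) (real (\<sigma> j))))"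
          using sj by (intro sum_mono mult_left_mono ennreal_leI) auto
        also have "\<dots> \<le> dcost (\<lambda>k l. min (D k l) (real (\<sigma> j))) (\<theta> (\<sigma> j))"
          unfolding dcost_def by (rule box_le_dsum)
        also have "\<dots> \<le> T" by (rule cost)
        finally show "(\<Sum>k<a. \<Sum>l<b. \<theta> (\<sigma> j) k l * ennreal (min (D k l) (real Mb))) \<le> T" .
      qed
    qed
    then show ?thesis using eq by simp
  qed
  have "dcost D \<theta>' \<le> T"
    unfolding dcost_def dsum_SUP[of "\<lambda>k l. \<theta>' k l * ennreal (D k l)"]
    by (intro SUP_least box)
  with C show ?thesis by blast
qed

lemma thA_meas[measurable]:
  assumes [measurable]: "\<And>k. (\<lambda>s. p s k) \<in> borel_measurable X" "\<And>l. (\<lambda>s. q s l) \<in> borel_measurable X"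
  shows "(\<lambda>s. thA a (p s) (q s) k l) \<in> borel_measurable X"
  unfolding thA_def feas_def by measurable

lemma dcost_thA_meas[measurable]:
  assumes [measurable]: "\<And>k. (\<lambda>s. p s k) \<in> borel_measurable X" "\<And>l. (\<lambda>s. q s l) \<in> borel_measurable X"
  shows "(\<lambda>s. dcost TD (thA a (p s) (q s))) \<in> borel_measurable X"
  unfolding dcost_def by measurable

definition selidx where
  "selidx TD p q \<delta> s = (LEAST j. dcost TD (thA (from_nat j) (p s) (q s))
       \<le> (INF i. dcost TD (thA (from_nat i) (p s) (q s))) + ennreal \<delta>)"

definition thsel where
  "thsel TD p q \<delta> s = thA (from_nat (selidx TD p q \<delta> s) :: nat \<times> rat list) (p s) (q s)"

lemma selidx_meas:
  assumes [measurable]: "\<And>k. (\<lambda>s. p s k) \<in> borel_measurable X" "\<And>l. (\<lambda>s. q s l) \<in> borel_measurable X"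
  shows "selidx TD p q \<delta> \<in> X \<rightarrow>\<^sub>M count_space UNIV"
  unfolding selidx_def by measurable

lemma thsel_meas[measurable]:
  assumes [measurable]: "\<And>k. (\<lambda>s. p s k) \<in> borel_measurable X" "\<And>l. (\<lambda>s. q s l) \<in> borel_measurable X"
  shows "(\<lambda>s. thsel TD p q \<delta> s k l) \<in> borel_measurable X"
  unfolding thsel_def
  by (rule measurable_compose_countable[where f="\<lambda>j s. thA (from_nat j :: nat \<times> rat list) (p s) (q s) k l"])
     (simp_all add: selidx_meas)

lemma dcost_le_M:
  assumes "dcoup th p q" "(\<Sum>k. p k) = 1" "\<And>k l. TD k l \<le> M"
  shows "dcost TD th \<le> ennreal M"
proof -
  have "dcost TD th \<le> (\<Sum>k. \<Sum>l. th k l * ennreal M)"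
    unfolding dcost_def by (intro suminf_le allI mult_left_mono ennreal_leI assms(3)) auto
  also have "\<dots> = (\<Sum>k. \<Sum>l. th k l) * ennreal M" by (simp add: ennreal_suminf_multc)
  also have "(\<Sum>k. \<Sum>l. th k l) = 1" using dcoup_total[OF assms(1)] assms(2) by simp
  finally show ?thesis by simp
qed

lemma thsel_good:
  fixes D :: "nat \<Rightarrow> nat \<Rightarrow> real" and M :: nat
  assumes p1: "(\<Sum>k. p s k) = 1" and q1: "(\<Sum>l. q s l) = 1" and \<delta>: "0 < \<delta>"
  shows "dcoup (thsel (\<lambda>k l. min (D k l) (real M)) p q \<delta> s) (p s) (q s)"
    and "\<And>\<theta>. dcoup \<theta> (p s) (q s) \<Longrightarrow>
          dcost (\<lambda>k l. min (D k l) (real M)) (thsel (\<lambda>k l. min (D k l) (real M)) p q \<delta> s)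
           \<le> dcost (\<lambda>k l. min (D k l) (real M)) \<theta> + ennreal (2 * \<delta>)"
proof -
  define TD where "TD = (\<lambda>k l. min (D k l) (real M))"
  define c where "c j = dcost TD (thA (from_nat j :: nat \<times> rat list) (p s) (q s))" for j
  define V where "V = (INF i. c i)"
  show "dcoup (thsel (\<lambda>k l. min (D k l) (real M)) p q \<delta> s) (p s) (q s)"
    unfolding thsel_def by (rule thA_coup[OF p1 q1])
  have "V \<le> c 0" unfolding V_def by (rule INF_lower) simp
  also have "c 0 \<le> ennreal (real M)" unfolding c_def TD_def
    by (rule dcost_le_M[OF thA_coup[OF p1 q1] p1]) simp
  finally have Vfin: "V \<noteq> \<top>" by (auto simp: top_unique)
  have "V < V + ennreal \<delta>" using Vfin \<delta> by (simp add: ennreal_add_left_cancel_less[of V 0, simplified])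
  then obtain j where "c j < V + ennreal \<delta>" unfolding V_def by (auto simp: INF_less_iff)
  then have ex: "\<exists>j. c j \<le> V + ennreal \<delta>" by (auto intro: less_imp_le)
  have sel: "c (selidx TD p q \<delta> s) \<le> V + ennreal \<delta>"
    unfolding selidx_def c_def[symmetric] V_def[symmetric] using LeastI_ex[OF ex] .
  fix \<theta> assume th: "dcoup \<theta> (p s) (q s)"
  obtain a where a: "dcost TD (thA a (p s) (q s)) \<le> dcost TD \<theta> + ennreal \<delta>"
    using thA_dense[OF th p1 q1 \<delta>, of "real M" D] unfolding TD_def by auto
  have "V \<le> c (to_nat a)" unfolding V_def by (rule INF_lower) simp
  also have "c (to_nat a) = dcost TD (thA a (p s) (q s))" unfolding c_def by simp
  finally have "c (selidx TD p q \<delta> s) \<le> dcost TD \<theta> + ennreal \<delta> + ennreal \<delta>"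
    using sel a by (meson add_right_mono order_trans)
  also have "\<dots> = dcost TD \<theta> + ennreal (2 * \<delta>)" using \<delta> by (simp add: add.assoc ennreal_plus[symmetric])
  finally show "dcost (\<lambda>k l. min (D k l) (real M)) (thsel (\<lambda>k l. min (D k l) (real M)) p q \<delta> s)
           \<le> dcost (\<lambda>k l. min (D k l) (real M)) \<theta> + ennreal (2 * \<delta>)"
    unfolding thsel_def c_def TD_def .
qed

lemma merge_restrict_meas:
  assumes "J \<subseteq> I"
  shows "(\<lambda>(s, t). merge J (I - J) (t, s)) \<in> (PiM I M \<Otimes>\<^sub>M PiM J M) \<rightarrow>\<^sub>M PiM I M"
proof -
  have m1: "(\<lambda>(s, t). (t, restrict s (I - J))) \<in> (PiM I M \<Otimes>\<^sub>M PiM J M) \<rightarrow>\<^sub>M (PiM J M \<Otimes>\<^sub>M PiM (I - J) M)"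
    by measurable
  have m2: "merge J (I - J) \<in> (PiM J M \<Otimes>\<^sub>M PiM (I - J) M) \<rightarrow>\<^sub>M PiM (J \<union> (I - J)) M"
    by (rule measurable_merge)
  have JI: "J \<union> (I - J) = I" using assms by auto
  have mm: "(\<lambda>x. merge J (I - J) ((\<lambda>(s, t). (t, restrict s (I - J))) x)) \<in> (PiM I M \<Otimes>\<^sub>M PiM J M) \<rightarrow>\<^sub>M PiM I M"
    using measurable_comp[OF m1 m2] JI by (simp add: comp_def)
  have eq: "(\<lambda>x. merge J (I - J) ((\<lambda>(s, t). (t, restrict s (I - J))) x)) = (\<lambda>(s, t). merge J (I - J) (t, s))"
    by (rule ext) (auto simp: merge_def fun_eq_iff split: prod.splits)
  show ?thesis using mm unfolding eq .
qed

lemma fold_merge: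
  fixes PZ :: "'z measure" and I J :: "nat set"
  assumes PZ: "prob_space PZ" and JI: "J \<subseteq> I" and fin: "finite I"
    and f[measurable]: "f \<in> borel_measurable (PiM I (\<lambda>_. PZ))"
  shows "(\<integral>\<^sup>+ s. (\<integral>\<^sup>+ t. f (merge J (I - J) (t, s)) \<partial>PiM J (\<lambda>_. PZ)) \<partial>PiM I (\<lambda>_. PZ))
       = integral\<^sup>N (PiM I (\<lambda>_. PZ)) f"
proof -
  interpret product_prob_space "\<lambda>_::nat. PZ"
    using PZ by (simp add: product_prob_space_def product_prob_space_axioms_def product_sigma_finite_def prob_space_imp_sigma_finite)
  define Jc where "Jc = I - J"
  have finJ: "finite J" "finite Jc" using fin JI unfolding Jc_def by (auto intro: finite_subset)
  have dis: "Jc \<inter> J = {}" unfolding Jc_def by auto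
  have IU: "Jc \<union> J = I" unfolding Jc_def using JI by auto
  interpret PJ: prob_space "PiM J (\<lambda>_. PZ)" by (rule prob_space_PiM) (use PZ in simp)
  have mm[measurable]: "(\<lambda>(s, t). merge J Jc (t, s)) \<in> (PiM I (\<lambda>_. PZ) \<Otimes>\<^sub>M PiM J (\<lambda>_. PZ)) \<rightarrow>\<^sub>M PiM I (\<lambda>_. PZ)"
    unfolding Jc_def by (rule merge_restrict_meas[OF JI])
  have hm: "(\<lambda>s. \<integral>\<^sup>+ t. f (merge J Jc (t, s)) \<partial>PiM J (\<lambda>_. PZ)) \<in> borel_measurable (PiM I (\<lambda>_. PZ))"
  proof (rule sigma_finite_measure.borel_measurable_nn_integral[OF PJ.sigma_finite_measure_axioms])
    show "(\<lambda>(s, t). f (merge J Jc (t, s))) \<in> borel_measurable (PiM I (\<lambda>_. PZ) \<Otimes>\<^sub>M PiM J (\<lambda>_. PZ))"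
      using measurable_comp[OF mm f] by (simp add: comp_def case_prod_beta')
  qed
  have "(\<integral>\<^sup>+ s. (\<integral>\<^sup>+ t. f (merge J Jc (t, s)) \<partial>PiM J (\<lambda>_. PZ)) \<partial>PiM I (\<lambda>_. PZ))
      = (\<integral>\<^sup>+ x. (\<integral>\<^sup>+ y. (\<integral>\<^sup>+ t. f (merge J Jc (t, merge Jc J (x, y))) \<partial>PiM J (\<lambda>_. PZ)) \<partial>PiM J (\<lambda>_. PZ)) \<partial>PiM Jc (\<lambda>_. PZ))"
    using product_nn_integral_fold[OF dis finJ(2) finJ(1), of "\<lambda>s. \<integral>\<^sup>+ t. f (merge J Jc (t, s)) \<partial>PiM J (\<lambda>_. PZ)"] hm IU
    by simp
  also have "\<dots> = (\<integral>\<^sup>+ x. (\<integral>\<^sup>+ y. (\<integral>\<^sup>+ t. f (merge Jc J (x, t)) \<partial>PiM J (\<lambda>_. PZ)) \<partial>PiM J (\<lambda>_. PZ)) \<partial>PiM Jc (\<lambda>_. PZ))"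
  proof -
    have eq: "merge J Jc (t, merge Jc J (x, y)) = merge Jc J (x, t)" for t x y
      using dis by (auto simp: merge_def fun_eq_iff)
    show ?thesis by (intro nn_integral_cong) (simp only: eq)
  qed
  also have "\<dots> = (\<integral>\<^sup>+ x. (\<integral>\<^sup>+ t. f (merge Jc J (x, t)) \<partial>PiM J (\<lambda>_. PZ)) \<partial>PiM Jc (\<lambda>_. PZ))"
    by (simp add: PJ.emeasure_space_1)
  also have "\<dots> = integral\<^sup>N (PiM I (\<lambda>_. PZ)) f"
    using product_nn_integral_fold[OF dis finJ(2) finJ(1), of f] IU by simp
  finally show ?thesis unfolding Jc_def .
qed

lemma upd_meas:
  assumes "i \<in> I"
  shows "(\<lambda>(z, s). s(i := z)) \<in> (PZ \<Otimes>\<^sub>M PiM I (\<lambda>_. PZ)) \<rightarrow>\<^sub>M PiM I (\<lambda>_. PZ)"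
proof (rule measurable_PiM_single')
  fix j assume "j \<in> I"
  show "(\<lambda>x. (case x of (z, s) \<Rightarrow> s(i := z)) j) \<in> (PZ \<Otimes>\<^sub>M PiM I (\<lambda>_. PZ)) \<rightarrow>\<^sub>M PZ"
  proof (cases "j = i")
    case True then show ?thesis by (simp add: case_prod_beta')
  next
    case False
    have "(\<lambda>x. snd x j) \<in> (PZ \<Otimes>\<^sub>M PiM I (\<lambda>_. PZ)) \<rightarrow>\<^sub>M PZ" using \<open>j \<in> I\<close> by measurable
    then show ?thesis using False by (simp add: case_prod_beta')
  qed
next
  show "(\<lambda>(z, s). s(i := z)) \<in> space (PZ \<Otimes>\<^sub>M PiM I (\<lambda>_. PZ)) \<rightarrow> (\<Pi>\<^sub>E j\<in>I. space PZ)"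
    using assms by (auto simp: space_pair_measure space_PiM PiE_def Pi_def extensional_def)
qed

lemma upd_meas1:
  assumes "i \<in> I" "z \<in> space PZ"
  shows "(\<lambda>s. s(i := z)) \<in> PiM I (\<lambda>_. PZ) \<rightarrow>\<^sub>M PiM I (\<lambda>_. PZ)"
proof -
  have "(\<lambda>s. (\<lambda>(z, s). s(i := z)) (z, s)) \<in> PiM I (\<lambda>_. PZ) \<rightarrow>\<^sub>M PiM I (\<lambda>_. PZ)"
    by (rule measurable_compose[OF measurable_Pair1'[OF assms(2)] upd_meas[OF assms(1)]])
  then show ?thesis by simp
qed

lemma fubini_upd:
  fixes PZ :: "'z measure" and I :: "nat set"
  assumes PZ: "prob_space PZ" and iI: "i \<in> I" and fin: "finite I"
    and f[measurable]: "f \<in> borel_measurable (PiM I (\<lambda>_. PZ))"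
  shows "(\<integral>\<^sup>+ z. (\<integral>\<^sup>+ s. f (s(i := z)) \<partial>PiM I (\<lambda>_. PZ)) \<partial>PZ) = integral\<^sup>N (PiM I (\<lambda>_. PZ)) f"
    and "(\<lambda>z. \<integral>\<^sup>+ s. f (s(i := z)) \<partial>PiM I (\<lambda>_. PZ)) \<in> borel_measurable PZ"
proof -
  interpret product_prob_space "\<lambda>_::nat. PZ"
    using PZ by (simp add: product_prob_space_def product_prob_space_axioms_def product_sigma_finite_def prob_space_imp_sigma_finite)
  have PIs: "sigma_finite_measure (PiM I (\<lambda>_. PZ))"
    by (rule prob_space_imp_sigma_finite, rule prob_space_PiM) (use PZ in simp)
  interpret ZZ: prob_space PZ by fact
  interpret pair_sigma_finite PZ "PiM I (\<lambda>_. PZ)" ..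
  have gm: "(\<lambda>(z, s). f (s(i := z))) \<in> borel_measurable (PZ \<Otimes>\<^sub>M PiM I (\<lambda>_. PZ))"
    using measurable_comp[OF upd_meas[OF iI] f] by (simp add: comp_def case_prod_beta')
  show "(\<lambda>z. \<integral>\<^sup>+ s. f (s(i := z)) \<partial>PiM I (\<lambda>_. PZ)) \<in> borel_measurable PZ"
    using sigma_finite_measure.borel_measurable_nn_integral[OF PIs gm] .
  have "(\<integral>\<^sup>+ z. (\<integral>\<^sup>+ s. f (s(i := z)) \<partial>PiM I (\<lambda>_. PZ)) \<partial>PZ)
      = (\<integral>\<^sup>+ s. (\<integral>\<^sup>+ z. f (s(i := z)) \<partial>PZ) \<partial>PiM I (\<lambda>_. PZ))"
    using Fubini'[OF gm] by simp
  also have "\<dots> = (\<integral>\<^sup>+ s. (\<integral>\<^sup>+ t. f (merge {i} (I - {i}) (t, s)) \<partial>PiM {i} (\<lambda>_. PZ)) \<partial>PiM I (\<lambda>_. PZ))"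
  proof (rule nn_integral_cong)
    fix s assume s: "s \<in> space (PiM I (\<lambda>_. PZ))"
    have fz: "(\<lambda>z. f (s(i := z))) \<in> borel_measurable PZ"
      using measurable_compose[OF measurable_Pair2'[OF s] gm] by simp
    have "(\<integral>\<^sup>+ z. f (s(i := z)) \<partial>PZ) = (\<integral>\<^sup>+ t. f (s(i := t i)) \<partial>PiM {i} (\<lambda>_. PZ))"
      using product_nn_integral_singleton[of "\<lambda>z. f (s(i := z))" i] fz by simp
    also have "\<dots> = (\<integral>\<^sup>+ t. f (merge {i} (I - {i}) (t, s)) \<partial>PiM {i} (\<lambda>_. PZ))"
    proof (rule nn_integral_cong)
      fix t
      have "s(i := t i) = merge {i} (I - {i}) (t, s)"
        using s iI by (auto simp: merge_def fun_eq_iff space_PiM PiE_def extensional_def)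
      then show "f (s(i := t i)) = f (merge {i} (I - {i}) (t, s))" by simp
    qed
    finally show "(\<integral>\<^sup>+ z. f (s(i := z)) \<partial>PZ) = (\<integral>\<^sup>+ t. f (merge {i} (I - {i}) (t, s)) \<partial>PiM {i} (\<lambda>_. PZ))" .
  qed
  also have "\<dots> = integral\<^sup>N (PiM I (\<lambda>_. PZ)) f"
    by (rule fold_merge[OF PZ _ fin f]) (use iI in auto)
  finally show "(\<integral>\<^sup>+ z. (\<integral>\<^sup>+ s. f (s(i := z)) \<partial>PiM I (\<lambda>_. PZ)) \<partial>PZ) = integral\<^sup>N (PiM I (\<lambda>_. PZ)) f" .
qed

lemma INF_plus_bound:
  fixes X :: ennreal and c :: real
  assumes "\<And>R. R \<in> A \<Longrightarrow> X \<le> f R + ennreal c"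
  shows "X \<le> (INF R\<in>A. f R) + ennreal c"
proof -
  have "X - ennreal c \<le> (INF R\<in>A. f R)"
  proof (rule INF_greatest)
    fix R assume "R \<in> A"
    then show "X - ennreal c \<le> f R" using assms[of R] by (simp add: ennreal_minus_le_iff add.commute)
  qed
  then have "X - ennreal c + ennreal c \<le> (INF R\<in>A. f R) + ennreal c" by (rule add_right_mono)
  moreover have "X \<le> X - ennreal c + ennreal c" by (auto simp: diff_add_self_ennreal not_le intro: less_imp_le)
  ultimately show ?thesis by (rule order_trans[rotated])
qed

lemma dcost_mono_D: "(\<And>k l. D1 k l \<le> D2 k l) \<Longrightarrow> dcost D1 th \<le> dcost D2 th"
  unfolding dcost_def by (intro suminf_le allI mult_left_mono ennreal_leI) auto

lemma kernel_facts:
  assumes K: "K \<in> M \<rightarrow>\<^sub>M prob_algebra N" and s: "s \<in> space M"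
  shows "prob_space (K s)" "sets (K s) = sets N"
  using measurable_space[OF K s] by (auto simp: space_prob_algebra)

lemma lower_int_shift:
  fixes C F :: "'a \<Rightarrow> ennreal"
  assumes M: "prob_space M" and C: "C \<in> borel_measurable M"
    and le: "\<And>s. s \<in> space M \<Longrightarrow> C s \<le> F s + ennreal c"
  shows "integral\<^sup>N M C \<le> integral\<^sup>N M F + ennreal c"
proof -
  interpret prob_space M by fact
  have "integral\<^sup>N M C \<le> (\<integral>\<^sup>+ s. (C s - ennreal c) + ennreal c \<partial>M)"
    by (intro nn_integral_mono) (auto simp: diff_add_self_ennreal not_le intro: less_imp_le)
  also have "\<dots> = (\<integral>\<^sup>+ s. C s - ennreal c \<partial>M) + ennreal c"
    using C by (subst nn_integral_add) (auto simp: emeasure_space_1)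
  also have "(\<integral>\<^sup>+ s. C s - ennreal c \<partial>M) \<le> integral\<^sup>N M F"
    using le by (intro nn_integral_mono) (simp add: ennreal_minus_le_iff add.commute)
  finally show ?thesis by (simp add: add_right_mono)
qed

context
  fixes PZ :: "'z measure" and K :: "(nat \<Rightarrow> 'z) \<Rightarrow> 'w::polish_space measure" and n :: nat
  assumes PZ: "prob_space PZ"
    and K: "K \<in> sample_law n PZ \<rightarrow>\<^sub>M prob_algebra (borel :: 'w measure)"
begin

lemma mu_prob: "prob_space (sample_law n PZ)"
  unfolding sample_law_def by (rule prob_space_PiM) (use PZ in simp)

lemma mu_space: "sample_law n PZ \<in> space (prob_algebra (sample_law n PZ))"
  using mu_prob by (simp add: space_prob_algebra)

lemma K_prob: "s \<in> space (sample_law n PZ) \<Longrightarrow> prob_space (K s)"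
  and K_sets: "s \<in> space (sample_law n PZ) \<Longrightarrow> sets (K s) = sets borel"
  using kernel_facts[OF K] by auto

lemma Q_kernel:
  assumes J: "J \<subseteq> {..<n}"
  shows "(\<lambda>(s, t). K (merge J ({..<n} - J) (t, s))) \<in> (sample_law n PZ \<Otimes>\<^sub>M PiM J (\<lambda>_. PZ)) \<rightarrow>\<^sub>M prob_algebra borel"
  using measurable_comp[OF merge_restrict_meas[OF J] K[unfolded sample_law_def]]
  unfolding sample_law_def by (simp add: comp_def case_prod_beta')

lemma Q_kernel1:
  assumes J: "J \<subseteq> {..<n}" and s: "s \<in> space (sample_law n PZ)"
  shows "(\<lambda>t. K (merge J ({..<n} - J) (t, s))) \<in> PiM J (\<lambda>_. PZ) \<rightarrow>\<^sub>M prob_algebra borel"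
  using measurable_compose[OF measurable_Pair1'[OF s] Q_kernel[OF J]] by simp

lemma PiJ_space: "PiM J (\<lambda>_. PZ) \<in> space (prob_algebra (PiM J (\<lambda>_. PZ)))"
  using prob_space_PiM[of J "\<lambda>_. PZ"] PZ by (simp add: space_prob_algebra)

lemma Q_meas:
  assumes J: "J \<subseteq> {..<n}"
  shows "law_W_given_compl n PZ K J \<in> sample_law n PZ \<rightarrow>\<^sub>M prob_algebra borel"
proof -
  have "(\<lambda>s. bind (PiM J (\<lambda>_. PZ)) (\<lambda>t. K (merge J ({..<n} - J) (t, s)))) \<in> sample_law n PZ \<rightarrow>\<^sub>M prob_algebra borel"
    by (rule measurable_bind_prob_space2[OF measurable_const[OF PiJ_space] Q_kernel[OF J]])
  then show ?thesis unfolding law_W_given_compl_def[abs_def] .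
qed

lemma Q_emeasure:
  assumes J: "J \<subseteq> {..<n}" and s: "s \<in> space (sample_law n PZ)" and A: "A \<in> sets borel"
  shows "emeasure (law_W_given_compl n PZ K J s) A = (\<integral>\<^sup>+ t. emeasure (K (merge J ({..<n} - J) (t, s))) A \<partial>PiM J (\<lambda>_. PZ))"
  unfolding law_W_given_compl_def by (rule emeasure_bind_prob_algebra[OF PiJ_space Q_kernel1[OF J s] A])

lemma Q_upd: "i \<in> J \<Longrightarrow> law_W_given_compl n PZ K J (s(i := z)) = law_W_given_compl n PZ K J s"
  unfolding law_W_given_compl_def by (rule bind_cong) (auto intro!: arg_cong[where f=K] simp: merge_def fun_eq_iff)

lemma W_prob: "prob_space (law_W n PZ K)" and W_sets: "sets (law_W n PZ K) = sets borel"
  unfolding law_W_def using prob_space_bind'[OF mu_space K] sets_bind'[OF mu_space K] by auto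

lemma W_emeasure: "A \<in> sets borel \<Longrightarrow> emeasure (law_W n PZ K) A = (\<integral>\<^sup>+ s. emeasure (K s) A \<partial>sample_law n PZ)"
  unfolding law_W_def by (rule emeasure_bind_prob_algebra[OF mu_space K])

lemma Zi_kernel:
  assumes i: "i < n" and z: "z \<in> space PZ"
  shows "(\<lambda>s. K (s(i := z))) \<in> sample_law n PZ \<rightarrow>\<^sub>M prob_algebra borel"
proof -
  have u: "(\<lambda>s. s(i := z)) \<in> PiM {..<n} (\<lambda>_. PZ) \<rightarrow>\<^sub>M PiM {..<n} (\<lambda>_. PZ)"
    using upd_meas1[of i "{..<n}" z PZ] i z by simp
  show ?thesis using measurable_comp[OF u K[unfolded sample_law_def]] unfolding sample_law_def by (simp add: comp_def)
qed

lemma Zi_prob: "i < n \<Longrightarrow> z \<in> space PZ \<Longrightarrow> prob_space (law_W_given_Zi n PZ K i z)"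
  and Zi_sets: "i < n \<Longrightarrow> z \<in> space PZ \<Longrightarrow> sets (law_W_given_Zi n PZ K i z) = sets borel"
  unfolding law_W_given_Zi_def using prob_space_bind'[OF mu_space Zi_kernel] sets_bind'[OF mu_space Zi_kernel] by auto

lemma Zi_emeasure: "i < n \<Longrightarrow> z \<in> space PZ \<Longrightarrow> A \<in> sets borel \<Longrightarrow>
    emeasure (law_W_given_Zi n PZ K i z) A = (\<integral>\<^sup>+ s. emeasure (K (s(i := z))) A \<partial>sample_law n PZ)"
  unfolding law_W_given_Zi_def by (rule emeasure_bind_prob_algebra[OF mu_space Zi_kernel])

lemma Q_prob: "J \<subseteq> {..<n} \<Longrightarrow> s \<in> space (sample_law n PZ) \<Longrightarrow> prob_space (law_W_given_compl n PZ K J s)"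
  and Q_sets: "J \<subseteq> {..<n} \<Longrightarrow> s \<in> space (sample_law n PZ) \<Longrightarrow> sets (law_W_given_compl n PZ K J s) = sets borel"
  using kernel_facts[OF Q_meas] by auto

lemma upd_space: "i < n \<Longrightarrow> z \<in> space PZ \<Longrightarrow> s \<in> space (sample_law n PZ) \<Longrightarrow> s(i := z) \<in> space (sample_law n PZ)"
  using measurable_space[OF upd_meas1[of i "{..<n}" z PZ]] unfolding sample_law_def by simp

end

context
  fixes PZ :: "'z measure" and K :: "(nat \<Rightarrow> 'z) \<Rightarrow> 'w::polish_space measure" and n :: nat
  assumes PZ: "prob_space PZ"
    and K: "K \<in> sample_law n PZ \<rightarrow>\<^sub>M prob_algebra (borel :: 'w measure)"
begin

lemma main_iJ_eps:
  assumes iJ: "i \<in> J" and J: "J \<subseteq> {..<n}" and e: "0 < e" and \<delta>: "0 < \<delta>"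
  shows "(\<integral>\<^sup>+ z. wasserstein1 (law_W_given_Zi n PZ K i z) (law_W n PZ K) \<partial>PZ)
     \<le> (\<integral>\<^sup>+ s. wasserstein1 (K s) (law_W_given_compl n PZ K J s) \<partial>sample_law n PZ) + ennreal (4 * e + 2 * \<delta>)"
proof -
  let ?\<mu> = "sample_law n PZ"
  have i: "i < n" using iJ J by auto
  define Q where "Q = law_W_given_compl n PZ K J"
  define p where "p s k = emeasure (K s) (cell e k :: 'w set)" for s k
  define q where "q s l = emeasure (Q s) (cell e l :: 'w set)" for s l
  define TDM where "TDM M = (\<lambda>k l. min (Dm (dseq::nat\<Rightarrow>'w) k l) (real M))" for M :: nat
  define th where "th M s = thsel (TDM M) p q \<delta> s" for M s
  define C where "C s = (SUP M. dcost (TDM M) (th M s))" for s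
  define F where "F s = wasserstein1 (K s) (Q s)" for s
  have Kpa: "K \<in> ?\<mu> \<rightarrow>\<^sub>M subprob_algebra borel" using K by (rule measurable_prob_algebraD)
  have Qpa: "Q \<in> ?\<mu> \<rightarrow>\<^sub>M subprob_algebra borel" unfolding Q_def using Q_meas[OF PZ K J] by (rule measurable_prob_algebraD)
  have pm[measurable]: "(\<lambda>s. p s k) \<in> borel_measurable ?\<mu>" for k
    unfolding p_def using measurable_emeasure_kernel[OF Kpa] by simp
  have qm[measurable]: "(\<lambda>s. q s l) \<in> borel_measurable ?\<mu>" for l
    unfolding q_def using measurable_emeasure_kernel[OF Qpa] by simp
  have p1: "(\<Sum>k. p s k) = 1" if "s \<in> space ?\<mu>" for s
    unfolding p_def by (rule cell_mass_sum[OF K_prob[OF PZ K that] K_sets[OF PZ K that] e])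
  have q1: "(\<Sum>l. q s l) = 1" if "s \<in> space ?\<mu>" for s
    unfolding q_def Q_def by (rule cell_mass_sum[OF Q_prob[OF PZ K J that] Q_sets[OF PZ K J that] e])
  have thmeas[measurable]: "(\<lambda>s. th M s k l) \<in> borel_measurable ?\<mu>" for M k l
    unfolding th_def by (rule thsel_meas[OF pm qm])
  have dm[measurable]: "(\<lambda>s. dcost (TDM M) (th M s)) \<in> borel_measurable ?\<mu>" for M
    unfolding dcost_def by measurable
  have Cm[measurable]: "C \<in> borel_measurable ?\<mu>"
    unfolding C_def by measurable
  have claim1: "C s \<le> F s + ennreal (2 * e + 2 * \<delta>)" if s: "s \<in> space ?\<mu>" for s
    unfolding C_def
  proof (rule SUP_least)
    fix M :: nat
    show "dcost (TDM M) (th M s) \<le> F s + ennreal (2 * e + 2 * \<delta>)"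
      unfolding F_def wasserstein1_def
    proof (rule INF_plus_bound)
      fix R assume R: "R \<in> couplings (K s) (Q s)"
      define \<theta>R where "\<theta>R k l = emeasure R (cell e k \<times> cell e l :: ('w \<times> 'w) set)" for k l
      have cR: "dcoup \<theta>R (p s) (q s)" unfolding \<theta>R_def p_def q_def by (rule coupling_disc(1)[OF R e])
      have cc: "dcost (Dm (dseq::nat\<Rightarrow>'w)) \<theta>R \<le> (\<integral>\<^sup>+x. ennreal (dist (fst x) (snd x)) \<partial>R) + ennreal (2*e)"
        unfolding \<theta>R_def by (rule coupling_disc(2)[OF R e])
      have "dcost (TDM M) (th M s) \<le> dcost (TDM M) \<theta>R + ennreal (2 * \<delta>)"
        unfolding th_def TDM_def by (rule thsel_good(2)[where p=p and q=q and s=s, OF p1[OF s] q1[OF s] \<delta> cR])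
      also have "dcost (TDM M) \<theta>R \<le> dcost (Dm (dseq::nat\<Rightarrow>'w)) \<theta>R"
        unfolding TDM_def by (rule dcost_mono_D) simp
      also note cc
      finally show "dcost (TDM M) (th M s) \<le> (\<integral>\<^sup>+x. ennreal (dist (fst x) (snd x)) \<partial>R) + ennreal (2 * e + 2 * \<delta>)"
        using e \<delta> by (simp add: ennreal_plus add.assoc)
    qed
  qed
  have claim2: "wasserstein1 (law_W_given_Zi n PZ K i z) (law_W n PZ K) \<le> (\<integral>\<^sup>+ s. C (s(i := z)) \<partial>?\<mu>) + ennreal (2 * e)"
    if z: "z \<in> space PZ" for z
  proof -
    define Pz where "Pz = law_W_given_Zi n PZ K i z"
    define PW where "PW = law_W n PZ K"
    have us: "s(i := z) \<in> space ?\<mu>" if "s \<in> space ?\<mu>" for s using upd_space[OF PZ K i z that] .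
    have um: "(\<lambda>s. s(i := z)) \<in> ?\<mu> \<rightarrow>\<^sub>M ?\<mu>" unfolding sample_law_def using upd_meas1[of i "{..<n}" z PZ] i z by simp
    have pz: "emeasure Pz (cell e k) = (\<integral>\<^sup>+ s. p (s(i := z)) k \<partial>?\<mu>)" for k
      unfolding Pz_def p_def by (rule Zi_emeasure[OF PZ K i z]) simp
    have pw: "emeasure PW (cell e l) = (\<integral>\<^sup>+ s. q (s(i := z)) l \<partial>?\<mu>)" for l
    proof -
      have "emeasure PW (cell e l) = (\<integral>\<^sup>+ s. emeasure (K s) (cell e l) \<partial>?\<mu>)"
        unfolding PW_def by (rule W_emeasure[OF PZ K]) simp
      also have "\<dots> = (\<integral>\<^sup>+ s. (\<integral>\<^sup>+ t. emeasure (K (merge J ({..<n} - J) (t, s))) (cell e l) \<partial>PiM J (\<lambda>_. PZ)) \<partial>?\<mu>)"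
        unfolding sample_law_def
        by (rule fold_merge[OF PZ J, symmetric]) (use measurable_emeasure_kernel[OF Kpa] in \<open>auto simp: sample_law_def\<close>)
      also have "\<dots> = (\<integral>\<^sup>+ s. q s l \<partial>?\<mu>)"
        unfolding q_def Q_def by (intro nn_integral_cong Q_emeasure[OF PZ K J, symmetric]) auto
      also have "\<dots> = (\<integral>\<^sup>+ s. q (s(i := z)) l \<partial>?\<mu>)"
        unfolding q_def Q_def using Q_upd[OF PZ K iJ] by simp
      finally show ?thesis .
    qed
    define \<theta>b where "\<theta>b M k l = (\<integral>\<^sup>+ s. th M (s(i := z)) k l \<partial>?\<mu>)" for M k l
    have thum[measurable]: "(\<lambda>s. th M (s(i := z)) k l) \<in> borel_measurable ?\<mu>" for M k l
      using measurable_compose[OF um thmeas] .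
    have thc: "dcoup (th M (s(i := z))) (p (s(i := z))) (q (s(i := z)))" if "s \<in> space ?\<mu>" for M s
      unfolding th_def TDM_def by (rule thsel_good(1)[where p=p and q=q and s="s(i := z)", OF p1[OF us[OF that]] q1[OF us[OF that]] \<delta>])
    have cb: "dcoup (\<theta>b M) (\<lambda>k. emeasure Pz (cell e k)) (\<lambda>l. emeasure PW (cell e l))" for M
      unfolding dcoup_def
    proof (intro conjI allI)
      fix k
      have "(\<Sum>l. \<theta>b M k l) = (\<integral>\<^sup>+ s. (\<Sum>l. th M (s(i := z)) k l) \<partial>?\<mu>)"
        unfolding \<theta>b_def by (rule nn_integral_suminf[symmetric]) simp
      also have "\<dots> = (\<integral>\<^sup>+ s. p (s(i := z)) k \<partial>?\<mu>)"
        using thc unfolding dcoup_def by (intro nn_integral_cong) simp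
      finally show "(\<Sum>l. \<theta>b M k l) = emeasure Pz (cell e k)" using pz by simp
    next
      fix l
      have "(\<Sum>k. \<theta>b M k l) = (\<integral>\<^sup>+ s. (\<Sum>k. th M (s(i := z)) k l) \<partial>?\<mu>)"
        unfolding \<theta>b_def by (rule nn_integral_suminf[symmetric]) simp
      also have "\<dots> = (\<integral>\<^sup>+ s. q (s(i := z)) l \<partial>?\<mu>)"
        using thc unfolding dcoup_def by (intro nn_integral_cong) simp
      finally show "(\<Sum>k. \<theta>b M k l) = emeasure PW (cell e l)" using pw by simp
    qed
    define T where "T = (\<integral>\<^sup>+ s. C (s(i := z)) \<partial>?\<mu>)"
    have cbcost: "dcost (\<lambda>k l. min (Dm (dseq::nat\<Rightarrow>'w) k l) (real M)) (\<theta>b M) \<le> T" for M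
    proof -
      have "dcost (TDM M) (\<theta>b M) = (\<Sum>k. \<Sum>l. \<integral>\<^sup>+ s. th M (s(i := z)) k l * ennreal (TDM M k l) \<partial>?\<mu>)"
        unfolding dcost_def \<theta>b_def by (intro suminf_cong nn_integral_multc[symmetric]) simp
      also have "\<dots> = (\<Sum>k. \<integral>\<^sup>+ s. (\<Sum>l. th M (s(i := z)) k l * ennreal (TDM M k l)) \<partial>?\<mu>)"
        by (intro suminf_cong nn_integral_suminf[symmetric]) simp
      also have "\<dots> = (\<integral>\<^sup>+ s. dcost (TDM M) (th M (s(i := z))) \<partial>?\<mu>)"
        unfolding dcost_def by (intro nn_integral_suminf[symmetric]) simp
      also have "\<dots> \<le> T" unfolding T_def C_def by (intro nn_integral_mono SUP_upper) simp
      finally show ?thesis unfolding TDM_def .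
    qed
    have Pzp: "prob_space Pz" "sets Pz = sets borel" unfolding Pz_def using Zi_prob[OF PZ K i z] Zi_sets[OF PZ K i z] by auto
    have PWp: "prob_space PW" "sets PW = sets borel" unfolding PW_def using W_prob[OF PZ K] W_sets[OF PZ K] by auto
    obtain \<theta>' where \<theta>': "dcoup \<theta>' (\<lambda>k. emeasure Pz (cell e k)) (\<lambda>l. emeasure PW (cell e l))"
        "dcost (Dm (dseq::nat\<Rightarrow>'w)) \<theta>' \<le> T"
      using diag_limit[OF cb cbcost cell_mass_sum[OF Pzp e] cell_mass_sum[OF PWp e]] by blast
    have "wasserstein1 Pz PW \<le> dcost (Dm (dseq::nat\<Rightarrow>'w)) \<theta>' + ennreal (2 * e)"
      by (rule lift_bound[OF Pzp PWp e \<theta>'(1)])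
    also have "\<dots> \<le> T + ennreal (2 * e)" using \<theta>'(2) by (rule add_right_mono)
    finally show ?thesis unfolding Pz_def PW_def T_def .
  qed
  have Cupd: "(\<lambda>z. \<integral>\<^sup>+ s. C (s(i := z)) \<partial>?\<mu>) \<in> borel_measurable PZ"
    and Cint: "(\<integral>\<^sup>+ z. (\<integral>\<^sup>+ s. C (s(i := z)) \<partial>?\<mu>) \<partial>PZ) = integral\<^sup>N ?\<mu> C"
    using fubini_upd[OF PZ _ _ Cm[unfolded sample_law_def], of i] i unfolding sample_law_def by auto
  interpret ZZ: prob_space PZ by (rule PZ)
  have "(\<integral>\<^sup>+ z. wasserstein1 (law_W_given_Zi n PZ K i z) (law_W n PZ K) \<partial>PZ)
      \<le> (\<integral>\<^sup>+ z. (\<integral>\<^sup>+ s. C (s(i := z)) \<partial>?\<mu>) + ennreal (2 * e) \<partial>PZ)"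
    by (intro nn_integral_mono claim2)
  also have "\<dots> = (\<integral>\<^sup>+ z. (\<integral>\<^sup>+ s. C (s(i := z)) \<partial>?\<mu>) \<partial>PZ) + ennreal (2 * e)"
    using Cupd by (subst nn_integral_add) (auto simp: ZZ.emeasure_space_1)
  also have "\<dots> = integral\<^sup>N ?\<mu> C + ennreal (2 * e)" by (simp add: Cint)
  also have "integral\<^sup>N ?\<mu> C \<le> integral\<^sup>N ?\<mu> F + ennreal (2 * e + 2 * \<delta>)"
    by (rule lower_int_shift[OF mu_prob[OF PZ K] Cm claim1])
  finally have calc: "(\<integral>\<^sup>+ z. wasserstein1 (law_W_given_Zi n PZ K i z) (law_W n PZ K) \<partial>PZ)
      \<le> integral\<^sup>N ?\<mu> F + ennreal (2 * e + 2 * \<delta>) + ennreal (2 * e)" by (auto intro: add_right_mono order_trans)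
  have ab: "ennreal (2 * e + 2 * \<delta>) + ennreal (2 * e) = ennreal (4 * e + 2 * \<delta>)"
    using e \<delta> by (subst ennreal_plus[symmetric]) (auto simp: algebra_simps)
  show ?thesis using calc unfolding F_def Q_def add.assoc ab .
qed

end

lemma main_iJ:
  fixes PZ :: "'z measure" and K :: "(nat \<Rightarrow> 'z) \<Rightarrow> 'w::polish_space measure"
  assumes PZ: "prob_space PZ" and K: "K \<in> sample_law n PZ \<rightarrow>\<^sub>M prob_algebra (borel :: 'w measure)"
    and iJ: "i \<in> J" and J: "J \<subseteq> {..<n}"
  shows "(\<integral>\<^sup>+ z. wasserstein1 (law_W_given_Zi n PZ K i z) (law_W n PZ K) \<partial>PZ)
     \<le> (\<integral>\<^sup>+ s. wasserstein1 (K s) (law_W_given_compl n PZ K J s) \<partial>sample_law n PZ)"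
proof (rule ennreal_le_epsilon)
  fix \<epsilon> :: real assume \<epsilon>: "0 < \<epsilon>"
  have "(\<integral>\<^sup>+ z. wasserstein1 (law_W_given_Zi n PZ K i z) (law_W n PZ K) \<partial>PZ)
     \<le> (\<integral>\<^sup>+ s. wasserstein1 (K s) (law_W_given_compl n PZ K J s) \<partial>sample_law n PZ) + ennreal (4 * (\<epsilon>/8) + 2 * (\<epsilon>/8))"
    by (rule main_iJ_eps[OF PZ K iJ J]) (use \<epsilon> in auto)
  also have "\<dots> \<le> (\<integral>\<^sup>+ s. wasserstein1 (K s) (law_W_given_compl n PZ K J s) \<partial>sample_law n PZ) + ennreal \<epsilon>"
    using \<epsilon> by (intro add_left_mono ennreal_leI) simp
  finally show "(\<integral>\<^sup>+ z. wasserstein1 (law_W_given_Zi n PZ K i z) (law_W n PZ K) \<partial>PZ)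
     \<le> (\<integral>\<^sup>+ s. wasserstein1 (K s) (law_W_given_compl n PZ K J s) \<partial>sample_law n PZ) + ennreal \<epsilon>" .
qed

lemma count_J:
  assumes i: "i < n" and m: "1 \<le> m"
  shows "card {J. J \<in> {J. J \<subseteq> {..<n} \<and> card J = m} \<and> i \<in> J} = (n - 1) choose (m - 1)"
proof -
  define A where "A = {J. J \<in> {J. J \<subseteq> {..<n} \<and> card J = m} \<and> i \<in> J}"
  define B where "B = {J'. J' \<subseteq> {..<n} - {i} \<and> card J' = m - 1}"
  have "bij_betw (\<lambda>J. J - {i}) A B"
  proof (rule bij_betwI[where g="insert i"])
    show "(\<lambda>J. J - {i}) \<in> A \<rightarrow> B"
    proof
      fix J assume "J \<in> A"
      then have "J \<subseteq> {..<n}" "card J = m" "i \<in> J" unfolding A_def by auto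
      moreover have "finite J" using \<open>J \<subseteq> {..<n}\<close> finite_subset by blast
      ultimately show "J - {i} \<in> B" unfolding B_def by auto
    qed
    show "insert i \<in> B \<rightarrow> A"
    proof
      fix J' assume "J' \<in> B"
      then have "J' \<subseteq> {..<n} - {i}" "card J' = m - 1" unfolding B_def by auto
      moreover have "finite J'" using \<open>J' \<subseteq> {..<n} - {i}\<close> finite_subset by blast
      moreover have "i \<notin> J'" using \<open>J' \<subseteq> {..<n} - {i}\<close> by auto
      ultimately show "insert i J' \<in> A" unfolding A_def using i m by (auto simp: card_insert_disjoint)
    qed
    show "insert i (J - {i}) = J" if "J \<in> A" for J using that unfolding A_def by auto
    show "insert i J' - {i} = J'" if "J' \<in> B" for J' using that unfolding B_def by auto
  qed
  then have "card A = card B" by (rule bij_betw_same_card)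
  also have "card B = card ({..<n} - {i}) choose (m - 1)" unfolding B_def by (rule n_subsets) simp
  also have "card ({..<n} - {i}) = n - 1" using i by simp
  finally show ?thesis unfolding A_def .
qed

theorem proposition3:
  fixes PZ :: "'z measure"
    and K :: "(nat \<Rightarrow> 'z) \<Rightarrow> 'w::polish_space measure"
    and n m :: nat
  assumes "prob_space PZ"
    and "K \<in> sample_law n PZ \<rightarrow>\<^sub>M prob_algebra (borel :: 'w measure)"
    and "1 \<le> m" and "m \<le> n"
  shows "(\<Sum>i<n. \<integral>\<^sup>+ z. wasserstein1 (law_W_given_Zi n PZ K i z) (law_W n PZ K) \<partial>PZ) / of_nat n
     \<le> (\<Sum>J \<in> {J. J \<subseteq> {..<n} \<and> card J = m}.
           \<integral>\<^sup>+ s. wasserstein1 (K s) (law_W_given_compl n PZ K J s) \<partial>sample_law n PZ)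
         / of_nat (n choose m)"
proof -
  note PZ = assms(1) and K = assms(2) and m1 = assms(3) and mn = assms(4)
  define A where "A i = (\<integral>\<^sup>+ z. wasserstein1 (law_W_given_Zi n PZ K i z) (law_W n PZ K) \<partial>PZ)" for i
  define B where "B J = (\<integral>\<^sup>+ s. wasserstein1 (K s) (law_W_given_compl n PZ K J s) \<partial>sample_law n PZ)" for J
  define JJ where "JJ = {J. J \<subseteq> {..<n} \<and> card J = m}"
  have finJJ: "finite JJ" unfolding JJ_def by (rule finite_subset[of _ "Pow {..<n}"]) auto
  have AB: "A i \<le> B J" if "J \<in> JJ" "i \<in> J" for i J
    unfolding A_def B_def using that main_iJ[OF PZ K, of i J] unfolding JJ_def by auto
  define c where "c = (n - 1) choose (m - 1)"
  have key: "of_nat c * (\<Sum>i<n. A i) \<le> of_nat m * (\<Sum>J\<in>JJ. B J)"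
  proof -
    have "of_nat c * (\<Sum>i<n. A i) = (\<Sum>i<n. of_nat (card {J. J \<in> JJ \<and> i \<in> J}) * A i)"
      unfolding c_def JJ_def using count_J[OF _ m1] by (simp add: sum_distrib_left)
    also have "\<dots> = (\<Sum>i<n. \<Sum>J\<in>{J. J \<in> JJ \<and> i \<in> J}. A i)" by simp
    also have "\<dots> = (\<Sum>J\<in>JJ. \<Sum>i\<in>{i. i \<in> {..<n} \<and> i \<in> J}. A i)"
      by (rule sum.swap_restrict[symmetric]) (auto simp: finJJ)
    also have "\<dots> = (\<Sum>J\<in>JJ. \<Sum>i\<in>J. A i)"
      by (intro sum.cong refl) (auto simp: JJ_def)
    also have "\<dots> \<le> (\<Sum>J\<in>JJ. \<Sum>i\<in>J. B J)" by (intro sum_mono AB) auto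
    also have "\<dots> = (\<Sum>J\<in>JJ. of_nat m * B J)" by (intro sum.cong refl) (simp add: JJ_def)
    also have "\<dots> = of_nat m * (\<Sum>J\<in>JJ. B J)" by (simp add: sum_distrib_left)
    finally show ?thesis .
  qed
  have n0: "0 < n" and m0: "0 < m" using m1 mn by auto
  have Cpos: "0 < n choose m" using mn by simp
  have c0: "0 < c" unfolding c_def using m1 mn by simp
  have bin: "real m * real (n choose m) = real n * real c"
    unfolding c_def using times_binomial_minus1_eq[OF m0, of n] by (metis of_nat_mult)
  have lhs: "(\<Sum>i<n. A i) / of_nat n = (\<Sum>i<n. A i) * ennreal (1 / real n)"
    using n0 by (simp add: divide_ennreal_def inverse_ennreal ennreal_of_nat_eq_real_of_nat inverse_eq_divide)
  have rhs: "(\<Sum>J\<in>JJ. B J) / of_nat (n choose m) = (\<Sum>J\<in>JJ. B J) * ennreal (1 / real (n choose m))"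
    using Cpos by (simp add: divide_ennreal_def inverse_ennreal ennreal_of_nat_eq_real_of_nat inverse_eq_divide)
  have "(\<Sum>i<n. A i) * ennreal (1 / real n) = (of_nat c * (\<Sum>i<n. A i)) * ennreal (1 / (real m * real (n choose m)))"
  proof -
    have "ennreal (1 / real n) = ennreal (real c) * ennreal (1 / (real m * real (n choose m)))"
      using n0 m0 Cpos bin c0 by (simp add: ennreal_mult[symmetric] field_simps)
    then show ?thesis by (simp add: ennreal_of_nat_eq_real_of_nat ac_simps)
  qed
  also have "\<dots> \<le> (of_nat m * (\<Sum>J\<in>JJ. B J)) * ennreal (1 / (real m * real (n choose m)))"
    by (rule mult_right_mono[OF key]) simp
  also have "\<dots> = (\<Sum>J\<in>JJ. B J) * ennreal (1 / real (n choose m))"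
  proof -
    have "of_nat m * ennreal (1 / (real m * real (n choose m))) = ennreal (1 / real (n choose m))"
      using m0 Cpos by (simp add: ennreal_of_nat_eq_real_of_nat ennreal_mult[symmetric] field_simps)
    moreover have "(of_nat m * (\<Sum>J\<in>JJ. B J)) * ennreal (1 / (real m * real (n choose m)))
        = (\<Sum>J\<in>JJ. B J) * (of_nat m * ennreal (1 / (real m * real (n choose m))))"
      by (simp only: mult.assoc mult.left_commute)
    ultimately show ?thesis by simp
  qed
  finally have fin: "(\<Sum>i<n. A i) * ennreal (1 / real n) \<le> (\<Sum>J\<in>JJ. B J) * ennreal (1 / real (n choose m))" .
  have "(\<Sum>i<n. A i) / of_nat n \<le> (\<Sum>J\<in>JJ. B J) / of_nat (n choose m)"
    unfolding lhs rhs by (rule fin)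
  then show ?thesis unfolding A_def B_def JJ_def .
qed

end
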